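(* Let $n$ be large, let $\delta,\sigma,\beta>0$ be constants, $d=\delta\left(\frac{\log n}{\log\log n}\right)^{1/3}$, and $B=L_n(\frac13,\beta)$. Fix an integer $b$ with $0<b\le\frac12L_n(\frac13,\sigma)$. Let $a$ be uniformly random in $\{0,\dots,b-1\}$ and $m$ uniformly random among the integers in $\left[2^{-1/d}L_n\!\left(\frac23,\delta^{-1}\right),L_n\!\left(\frac23,\delta^{-1}\right)\right]$. Then $$\mathbb{P}_{a,m}\big(a-bm\text{ is }B\text{-smooth}\big)=L_n\!\left(\tfrac13,\tfrac{\delta^{-1}}{3\beta}(1+\mathbf{o}(1))\right)^{-1}.$$
   Context: $L_x(\alpha,c)=\exp\!\big(c(\log x)^{\alpha}(\log\log x)^{1-\alpha}\big)$. An integer $z$ is $B$-smooth if every prime dividing $z$ is at most $B$. $\mathbf{o}(1)$ denotes a quantity tending to $0$ as $n\to\infty$. *)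

theory Defs
  imports "HOL-Computational_Algebra.Primes" Complex_Main
begin

definition Lfun :: "real \<Rightarrow> real \<Rightarrow> real \<Rightarrow> real" where
  "Lfun x \<alpha> c = exp (c * (ln x) powr \<alpha> * (ln (ln x)) powr (1 - \<alpha>))"

definition smooth :: "real \<Rightarrow> int \<Rightarrow> bool" where
  "smooth B z \<longleftrightarrow> (\<forall>p::int. prime p \<and> p dvd z \<longrightarrow> real_of_int p \<le> B)"

definition m_range :: "nat \<Rightarrow> real \<Rightarrow> int set" where
  "m_range n \<delta> =
     (let d = \<delta> * (ln (real n) / ln (ln (real n))) powr (1/3);
          hi = Lfun (real n) (2/3) (1/\<delta>);
          lo = 2 powr (-1/d) * hi
      in {m::int. lo \<le> real_of_int m \<and> real_of_int m \<le> hi})"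

definition smooth_prob :: "nat \<Rightarrow> real \<Rightarrow> real \<Rightarrow> int \<Rightarrow> real" where
  "smooth_prob n \<delta> \<beta> b =
     real (card {(a, m). a \<in> {0..<b} \<and> m \<in> m_range n \<delta> \<and>
                  smooth (Lfun (real n) (1/3) \<beta>) (a - b * m)})
     / (real (card {0..<b}) * real (card (m_range n \<delta>)))"

end

theory Submission
  imports Defs "HOL-Number_Theory.Number_Theory" "HOL-Real_Asymp.Real_Asymp"
begin

lemma card_multiples:
  assumes "d > (0::nat)"
  shows "card {n \<in> {1..N}. d dvd n} = N div d"
proof -
  have "{n \<in> {1..N}. d dvd n} = (\<lambda>k. d * k) ` {1..N div d}"
  proof (safe)
    fix n assume n: "n \<in> {1..N}" "d dvd n"
    then obtain k where k: "n = d * k" by auto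
    have "k \<ge> 1" using n k by (cases k) auto
    moreover have "k \<le> N div d" using n k assms
      by (simp add: less_eq_div_iff_mult_less_eq mult.commute)
    ultimately show "n \<in> (\<lambda>k. d * k) ` {1..N div d}" using k by auto
  next
    fix k assume "k \<in> {1..N div d}"
    then show "d * k \<in> {1..N}" using assms
      by (auto simp: less_eq_div_iff_mult_less_eq mult.commute)
  qed auto
  moreover have "inj_on (\<lambda>k. d * k) {1..N div d}" using assms by (auto simp: inj_on_def)
  ultimately show ?thesis by (simp add: card_image)
qed

lemma ln_fact_mangoldt:
  "ln (fact N) = (\<Sum>d=1..N. mangoldt d * real (N div d))"
proof -
  have fp: "(fact N :: real) = (\<Prod>n=1..N. real n)" by (simp add: fact_prod)
  have "ln (fact N :: real) = (\<Sum>n=1..N. ln (real n))"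
    unfolding fp by (subst ln_prod) auto
  also have "\<dots> = (\<Sum>n=1..N. \<Sum>d\<in>{d. d dvd n}. (mangoldt d :: real))"
    by (intro sum.cong refl) (simp add: mangoldt_sum)
  also have "\<dots> = (\<Sum>n=1..N. \<Sum>d=1..N. if d dvd n then mangoldt d else 0)"
  proof (rule sum.cong[OF refl])
    fix n assume n: "n \<in> {1..N}"
    have "{d. d dvd n} = {d \<in> {1..N}. d dvd n}" using n
      by (auto dest: dvd_imp_le intro: Nat.gr0I)
    then have "(\<Sum>d\<in>{d. d dvd n}. (mangoldt d :: real)) = (\<Sum>d\<in>{d \<in> {1..N}. d dvd n}. mangoldt d)"
      by simp
    also have "\<dots> = (\<Sum>d=1..N. if d dvd n then mangoldt d else 0)"
      by (rule sum.inter_filter) simp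
    finally show "(\<Sum>d\<in>{d. d dvd n}. (mangoldt d :: real)) = (\<Sum>d=1..N. if d dvd n then mangoldt d else 0)" .
  qed
  also have "\<dots> = (\<Sum>d=1..N. \<Sum>n=1..N. if d dvd n then mangoldt d else 0)"
    by (rule sum.swap)
  also have "\<dots> = (\<Sum>d=1..N. mangoldt d * real (N div d))"
  proof (intro sum.cong refl)
    fix d assume d: "d \<in> {1..N}"
    have "(\<Sum>n=1..N. if d dvd n then (mangoldt d :: real) else 0) = (\<Sum>n\<in>{n \<in> {1..N}. d dvd n}. mangoldt d)"
      by (rule sum.inter_filter[symmetric]) simp
    also have "\<dots> = mangoldt d * real (N div d)" using d card_multiples[of d N] by simp
    finally show "(\<Sum>n=1..N. if d dvd n then (mangoldt d :: real) else 0) = mangoldt d * real (N div d)" .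
  qed
  finally show ?thesis .
qed

definition psi :: "nat \<Rightarrow> real" where "psi N = (\<Sum>d=1..N. mangoldt d)"

lemma psi_mono: "M \<le> N \<Longrightarrow> psi M \<le> psi N"
  unfolding psi_def by (intro sum_mono2) (auto simp: mangoldt_nonneg)

lemma psi_diff: "psi (2*M) - psi M \<le> 2 * real M * ln 2"
proof -
  have split: "{1..2*M} = {1..M} \<union> {M+1..2*M}" by auto
  have "psi (2*M) - psi M = (\<Sum>d=M+1..2*M. mangoldt d)"
    unfolding psi_def split by (subst sum.union_disjoint) auto
  also have "\<dots> \<le> (\<Sum>d=1..2*M. mangoldt d * real ((2*M) div d) - 2 * (mangoldt d * real (M div d)))"
  proof -
    have "(\<Sum>d=M+1..2*M. mangoldt d) = (\<Sum>d=M+1..2*M. (mangoldt d :: real) * real ((2*M) div d) - 2 * (mangoldt d * real (M div d)))"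
    proof (intro sum.cong refl)
      fix d assume d: "d \<in> {M+1..2*M}"
      then have "M div d = 0" by auto
      moreover have "(2*M) div d = 1"
      proof -
        have "1 \<le> (2*M) div d" using d by (simp add: div_greater_zero_iff Suc_le_eq)
        moreover have "(2*M) div d < 2" using d by (simp add: div_less_iff_less_mult)
        ultimately show ?thesis by simp
      qed
      ultimately show "(mangoldt d :: real) = mangoldt d * real ((2*M) div d) - 2 * (mangoldt d * real (M div d))" by simp
    qed
    also have "\<dots> \<le> (\<Sum>d=1..2*M. (mangoldt d :: real) * real ((2*M) div d) - 2 * (mangoldt d * real (M div d)))"
    proof (intro sum_mono2)
      fix d assume dd: "d \<in> {1..2*M} - {M+1..2*M}"
      have "M div d * d \<le> M" by (metis div_mult_mod_eq le_add1)
      then have "2 * (M div d) * d \<le> 2 * M" by simp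
      then have "2 * (M div d) \<le> (2*M) div d" using dd by (simp add: less_eq_div_iff_mult_less_eq)
      then have "2 * real (M div d) \<le> real ((2*M) div d)" by linarith
      then have "(mangoldt d :: real) * (2 * real (M div d)) \<le> mangoldt d * real ((2*M) div d)"
        by (intro mult_left_mono) (auto simp: mangoldt_nonneg)
      then show "0 \<le> (mangoldt d :: real) * real ((2*M) div d) - 2 * (mangoldt d * real (M div d))" by simp
    qed auto
    finally show ?thesis .
  qed
  also have "\<dots> = ln (fact (2*M)) - 2 * ln (fact M)"
  proof -
    have "ln (fact M) = (\<Sum>d=1..2*M. mangoldt d * real (M div d))"
      unfolding ln_fact_mangoldt split by (subst sum.union_disjoint) auto
    then show ?thesis by (simp add: ln_fact_mangoldt sum_subtractf sum_distrib_left)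
  qed
  also have "\<dots> = ln (real ((2*M) choose M))"
  proof -
    have "real ((2*M) choose M) = fact (2*M) / (fact M * fact M)"
      by (subst binomial_fact) auto
    then show ?thesis by (simp add: ln_div ln_mult)
  qed
  also have "\<dots> \<le> ln (2 ^ (2*M))"
    by (subst ln_le_cancel_iff) (auto simp: binomial_le_pow2 intro!: Nat.gr0I)
  also have "\<dots> = 2 * real M * ln 2" by (simp add: ln_realpow)
  finally show ?thesis .
qed

lemma psi_le: "psi N \<le> 4 * real N"
proof (induction N rule: less_induct)
  case (less N)
  show ?case
  proof (cases "N = 0")
    case True then show ?thesis by (simp add: psi_def)
  next
    case False
    obtain M where M: "N = 2*M \<or> N = 2*M+1" by (metis dvd_mult_div_cancel odd_two_times_div_two_succ)
    have MN: "M < N" using M False by auto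
    have l2: "ln (2::real) \<le> 1" using ln_le_minus_one[of 2] by simp
    have "psi (2*M) \<le> 4 * real M + 2 * real M * ln 2" using psi_diff[of M] less[OF MN] by linarith
    also have "\<dots> \<le> 6 * real M" using l2 mult_left_le[of "ln 2" "real M"] by simp
    finally have e: "psi (2*M) \<le> 6 * real M" .
    show ?thesis
    proof (cases "N = 2*M")
      case True then show ?thesis using e by simp
    next
      case False
      then have N: "N = Suc (2*M)" using M by simp
      have "psi N = psi (2*M) + mangoldt (Suc (2*M))"
        unfolding N psi_def by simp
      also have "mangoldt (Suc (2*M)) \<le> ln (real (Suc (2*M)))" by (rule mangoldt_le) simp
      also have "ln (real (Suc (2*M))) \<le> real (2*M)"
        using ln_add_one_self_le_self[of "real (2*M)"] by (simp add: add.commute)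
      finally show ?thesis using e N by simp
    qed
  qed
qed

lemma ln_fact_le: "ln (fact N :: real) \<le> real N * ln (real N)"
proof (cases "N = 0")
  case False
  have "(fact N :: real) \<le> real N ^ N" by (metis fact_le_power of_nat_fact of_nat_le_iff of_nat_power)
  then have "ln (fact N :: real) \<le> ln (real N ^ N)" using False by (subst ln_le_cancel_iff) auto
  then show ?thesis using False by (simp add: ln_realpow)
qed simp

lemma ln_fact_ge: "real N * ln (real N) - real N \<le> ln (fact N :: real)"
proof (induction N)
  case (Suc N)
  have key: "real N * ln (real (Suc N)) - real N * ln (real N) \<le> 1"
  proof (cases "N = 0")
    case False
    have q: "1 + 1 / real N = real (Suc N) / real N" using False by (simp add: field_simps)
    have "ln (real (Suc N)) - ln (real N) = ln (1 + 1 / real N)"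
      unfolding q using False by (subst ln_div) auto
    also have "\<dots> \<le> 1 / real N" by (rule ln_add_one_self_le_self) simp
    finally have "real N * (ln (real (Suc N)) - ln (real N)) \<le> real N * (1 / real N)"
      by (intro mult_left_mono) auto
    then show ?thesis using False by (simp add: algebra_simps)
  qed simp
  have "ln (fact (Suc N) :: real) = ln (real (Suc N)) + ln (fact N)"
    by (simp add: ln_mult)
  then show ?case using Suc key by (simp add: algebra_simps)
qed simp

lemma mertens_upper:
  assumes "N \<ge> 1"
  shows "(\<Sum>d=1..N. mangoldt d / real d) \<le> ln (real N) + 4"
proof -
  have "real N * (\<Sum>d=1..N. mangoldt d / real d) = (\<Sum>d=1..N. mangoldt d * (real N / real d))"
    by (simp add: sum_distrib_left field_simps)
  also have "\<dots> \<le> (\<Sum>d=1..N. mangoldt d * real (N div d) + mangoldt d)"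
  proof (intro sum_mono)
    fix d assume d: "d \<in> {1..N}"
    have "N < (N div d + 1) * d" using d dividend_less_div_times[of d N] by (simp add: algebra_simps)
    then have "real N < (real (N div d) + 1) * real d" by (metis of_nat_1 of_nat_add of_nat_less_iff of_nat_mult)
    then have "real N / real d \<le> real (N div d) + 1" using d by (simp add: divide_le_eq)
    then have "(mangoldt d :: real) * (real N / real d) \<le> mangoldt d * (real (N div d) + 1)"
      by (intro mult_left_mono) (auto simp: mangoldt_nonneg)
    then show "(mangoldt d :: real) * (real N / real d) \<le> mangoldt d * real (N div d) + mangoldt d"
      by (simp add: algebra_simps)
  qed
  also have "\<dots> = ln (fact N) + psi N" by (simp add: sum.distrib ln_fact_mangoldt psi_def)
  also have "\<dots> \<le> real N * ln (real N) + real N * 4" using ln_fact_le[of N] psi_le[of N] by simp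
  finally have "real N * (\<Sum>d=1..N. mangoldt d / real d) \<le> real N * (ln (real N) + 4)"
    by (simp add: algebra_simps)
  then show ?thesis using assms by (simp add: mult_le_cancel_left)
qed

lemma mertens_lower:
  assumes "N \<ge> 1"
  shows "ln (real N) - 1 \<le> (\<Sum>d=1..N. mangoldt d / real d)"
proof -
  have "real N * ln (real N) - real N \<le> ln (fact N)" by (rule ln_fact_ge)
  also have "\<dots> = (\<Sum>d=1..N. mangoldt d * real (N div d))" by (rule ln_fact_mangoldt)
  also have "\<dots> \<le> (\<Sum>d=1..N. mangoldt d * (real N / real d))"
  proof (intro sum_mono)
    fix d assume d: "d \<in> {1..N}"
    have "real (N div d) \<le> real N / real d" by (simp add: of_nat_div_le_of_nat)
    then show "(mangoldt d :: real) * real (N div d) \<le> mangoldt d * (real N / real d)"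
      by (intro mult_left_mono) (auto simp: mangoldt_nonneg)
  qed
  also have "\<dots> = real N * (\<Sum>d=1..N. mangoldt d / real d)"
    by (simp add: sum_distrib_left field_simps)
  finally have "real N * (ln (real N) - 1) \<le> real N * (\<Sum>d=1..N. mangoldt d / real d)"
    by (simp add: algebra_simps)
  then show ?thesis using assms by (simp add: mult_le_cancel_left)
qed

definition sm :: "real \<Rightarrow> nat \<Rightarrow> bool" where
  "sm y n \<longleftrightarrow> (\<forall>p. prime p \<and> p dvd n \<longrightarrow> real p \<le> y)"

definition cnt :: "real \<Rightarrow> real \<Rightarrow> real \<Rightarrow> nat" where
  "cnt y L T = card {n::nat. L < real n \<and> real n \<le> T \<and> sm y n}"

lemma sm_le: "0 < n \<Longrightarrow> real n \<le> y \<Longrightarrow> sm y n"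
  unfolding sm_def by (meson dvd_imp_le of_nat_le_iff order_trans)

lemma sm_mult: "sm y a \<Longrightarrow> sm y b \<Longrightarrow> sm y (a * b)"
  unfolding sm_def by (auto simp: prime_dvd_mult_iff)

lemma finite_nat_le_real: "finite {n::nat. real n \<le> T \<and> P n}"
proof -
  have "{n::nat. real n \<le> T \<and> P n} \<subseteq> {..nat \<lceil>T\<rceil>}"
  proof (rule subsetI)
    fix x :: nat assume "x \<in> {n::nat. real n \<le> T \<and> P n}"
    then have "real x \<le> T" by simp
    then have "real_of_int (int x) \<le> real_of_int \<lceil>T\<rceil>" using le_of_int_ceiling[of T] by linarith
    then have "int x \<le> \<lceil>T\<rceil>" by (simp only: of_int_le_iff)
    then show "x \<in> {..nat \<lceil>T\<rceil>}" by simp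
  qed
  then show ?thesis by (rule finite_subset) simp
qed

lemma finite_cnt_set: "finite {n::nat. L < real n \<and> real n \<le> T \<and> P n}"
  using finite_nat_le_real[of T "\<lambda>n. L < real n \<and> P n"] by (simp add: conj_commute conj_left_commute)

lemma nat_interval_eq:
  assumes "0 \<le> L" "L \<le> T"
  shows "{n::nat. L < real n \<and> real n \<le> T} = {Suc (nat \<lfloor>L\<rfloor>)..nat \<lfloor>T\<rfloor>}"
proof -
  have fl: "0 \<le> \<lfloor>L\<rfloor>" "0 \<le> \<lfloor>T\<rfloor>" using assms by simp_all
  have A: "L < real n \<longleftrightarrow> Suc (nat \<lfloor>L\<rfloor>) \<le> n" for n :: nat
  proof -
    have "L < real n \<longleftrightarrow> \<lfloor>L\<rfloor> < int n" using floor_less_iff[of L "int n"] by simp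
    also have "\<dots> \<longleftrightarrow> nat \<lfloor>L\<rfloor> < n" using nat_less_iff[OF fl(1), of n] by simp
    also have "\<dots> \<longleftrightarrow> Suc (nat \<lfloor>L\<rfloor>) \<le> n" by (rule Suc_le_eq[symmetric])
    finally show ?thesis .
  qed
  have B: "real n \<le> T \<longleftrightarrow> n \<le> nat \<lfloor>T\<rfloor>" for n :: nat
  proof -
    have "real n \<le> T \<longleftrightarrow> int n \<le> \<lfloor>T\<rfloor>" using le_floor_iff[of "int n" T] by simp
    also have "\<dots> \<longleftrightarrow> n \<le> nat \<lfloor>T\<rfloor>" using le_nat_iff[OF fl(2), of n] by simp
    finally show ?thesis .
  qed
  show ?thesis unfolding set_eq_iff mem_Collect_eq atLeastAtMost_iff A B by (rule allI) (rule refl)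
qed

lemma card_nat_interval:
  assumes "0 \<le> L" "L \<le> T"
  shows "T - L - 1 \<le> real (card {n::nat. L < real n \<and> real n \<le> T})"
proof -
  have "card {n::nat. L < real n \<and> real n \<le> T} = nat \<lfloor>T\<rfloor> - nat \<lfloor>L\<rfloor>"
    using assms by (simp add: nat_interval_eq)
  moreover have "nat \<lfloor>L\<rfloor> \<le> nat \<lfloor>T\<rfloor>" using assms by (simp add: floor_mono nat_mono)
  moreover have "real (nat \<lfloor>L\<rfloor>) \<le> L" using assms by linarith
  moreover have "T - 1 \<le> real (nat \<lfloor>T\<rfloor>)" using assms by linarith
  ultimately show ?thesis by (simp add: of_nat_diff)
qed

lemma mertens_interval:
  assumes "1 \<le> a" "a \<le> b"
  shows "ln b - ln a - 6 \<le> (\<Sum>d\<in>{d::nat. a < real d \<and> real d \<le> b}. mangoldt d / real d)"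
proof -
  define N1 where "N1 = nat \<lfloor>a\<rfloor>"
  define N2 where "N2 = nat \<lfloor>b\<rfloor>"
  have N1: "1 \<le> N1" "real N1 \<le> a" using assms unfolding N1_def by linarith+
  have N12: "N1 \<le> N2" using assms unfolding N1_def N2_def by (simp add: floor_mono nat_mono)
  have fb: "b - 1 < real_of_int \<lfloor>b\<rfloor>" "1 \<le> \<lfloor>b\<rfloor>" using assms by linarith+
  have rN2: "real N2 = real_of_int \<lfloor>b\<rfloor>" unfolding N2_def using fb by simp
  have N2: "b / 2 \<le> real N2" "1 \<le> N2" using fb rN2 by linarith+
  have set: "{d::nat. a < real d \<and> real d \<le> b} = {Suc N1..N2}"
    using assms unfolding N1_def N2_def by (simp add: nat_interval_eq)
  have split: "{1..N2} = {1..N1} \<union> {Suc N1..N2}" using N12 N1 by auto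
  have sum: "(\<Sum>d=1..N2. mangoldt d / real d) = (\<Sum>d=1..N1. mangoldt d / real d) + (\<Sum>d=Suc N1..N2. mangoldt d / real d :: real)"
    unfolding split by (subst sum.union_disjoint) auto
  have "ln (real N2) - 1 \<le> (\<Sum>d=1..N2. mangoldt d / real d)" using N2 by (intro mertens_lower) auto
  moreover have "(\<Sum>d=1..N1. mangoldt d / real d) \<le> ln (real N1) + 4" using N1 by (intro mertens_upper) auto
  moreover have "ln (real N1) \<le> ln a" using N1 by simp
  moreover have "ln b - ln 2 \<le> ln (real N2)"
  proof -
    have "ln (b / 2) \<le> ln (real N2)" using N2 assms by simp
    then show ?thesis using assms by (simp add: ln_div)
  qed
  moreover have "ln (2::real) \<le> 1" using ln_le_minus_one[of 2] by simp
  ultimately have "ln b - ln a - 6 \<le> (\<Sum>d=Suc N1..N2. mangoldt d / real d :: real)"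
    unfolding sum by linarith
  then show ?thesis by (simp only: set)
qed

lemma cnt_rec:
  fixes D :: "nat set"
  assumes D: "finite D" "\<And>d. d \<in> D \<Longrightarrow> 0 < d \<and> real d \<le> y" and \<rho>: "0 \<le> \<rho>" and t: "1 \<le> t"
  shows "(\<Sum>d\<in>D. mangoldt d * real (cnt y (\<rho> * (t / real d)) (t / real d))) \<le> ln t * real (cnt y (\<rho> * t) t)"
proof -
  define A where "A = {n::nat. \<rho> * t < real n \<and> real n \<le> t \<and> sm y n}"
  have finA: "finite A" unfolding A_def by (rule finite_cnt_set)
  have Apos: "0 < n" if "n \<in> A" for n
  proof -
    have "0 \<le> \<rho> * t" using \<rho> t by simp
    then show ?thesis using that unfolding A_def by (auto intro: Nat.gr0I)
  qed
  have step1: "real (cnt y (\<rho> * (t / real d)) (t / real d)) \<le> real (card {n \<in> A. d dvd n})" if d: "d \<in> D" for d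
  proof -
    have d0: "0 < d" "real d \<le> y" using D(2)[OF d] by auto
    have "card {m::nat. \<rho> * (t / real d) < real m \<and> real m \<le> t / real d \<and> sm y m} \<le> card {n \<in> A. d dvd n}"
    proof (rule card_inj_on_le)
      show "inj_on (\<lambda>m. d * m) {m::nat. \<rho> * (t / real d) < real m \<and> real m \<le> t / real d \<and> sm y m}"
        using d0 by (auto simp: inj_on_def)
      show "finite {n \<in> A. d dvd n}" using finA by simp
      show "(\<lambda>m. d * m) ` {m::nat. \<rho> * (t / real d) < real m \<and> real m \<le> t / real d \<and> sm y m} \<subseteq> {n \<in> A. d dvd n}"
      proof (safe)
        fix m :: nat assume m: "\<rho> * (t / real d) < real m" "real m \<le> t / real d" "sm y m"
        have dpos: "(0::real) < real d" using d0 by simp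
        have "\<rho> * t < real d * real m" using m(1) dpos by (simp add: field_simps)
        moreover have "real d * real m \<le> t" using m(2) dpos by (simp add: field_simps)
        moreover have "sm y (d * m)" using sm_mult[OF sm_le[of d y] m(3)] d0 by simp
        ultimately show "d * m \<in> A" unfolding A_def by simp
      qed simp
    qed
    then show ?thesis unfolding cnt_def by simp
  qed
  have "(\<Sum>d\<in>D. mangoldt d * real (cnt y (\<rho> * (t / real d)) (t / real d))) \<le> (\<Sum>d\<in>D. mangoldt d * real (card {n \<in> A. d dvd n}))"
    by (intro sum_mono mult_left_mono step1) (auto simp: mangoldt_nonneg)
  also have "\<dots> = (\<Sum>d\<in>D. \<Sum>n\<in>A. if d dvd n then mangoldt d else 0)"
  proof (rule sum.cong[OF refl])
    fix d assume "d \<in> D"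
    have "(\<Sum>n\<in>A. if d dvd n then (mangoldt d :: real) else 0) = (\<Sum>n\<in>{n \<in> A. d dvd n}. mangoldt d)"
      by (rule sum.inter_filter[symmetric]) (rule finA)
    then show "mangoldt d * real (card {n \<in> A. d dvd n}) = (\<Sum>n\<in>A. if d dvd n then (mangoldt d :: real) else 0)"
      by simp
  qed
  also have "\<dots> = (\<Sum>n\<in>A. \<Sum>d\<in>D. if d dvd n then mangoldt d else 0)" by (rule sum.swap)
  also have "\<dots> \<le> (\<Sum>n\<in>A. ln (real n))"
  proof (rule sum_mono)
    fix n assume n: "n \<in> A"
    have "(\<Sum>d\<in>D. if d dvd n then (mangoldt d :: real) else 0) = (\<Sum>d\<in>{d \<in> D. d dvd n}. mangoldt d)"
      by (rule sum.inter_filter[symmetric]) (rule D(1))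
    also have "\<dots> \<le> (\<Sum>d\<in>{d. d dvd n}. mangoldt d)"
      using Apos[OF n] by (intro sum_mono2) (auto simp: mangoldt_nonneg finite_divisors_nat)
    also have "\<dots> = ln (real n)" using Apos[OF n] by (simp add: mangoldt_sum)
    finally show "(\<Sum>d\<in>D. if d dvd n then (mangoldt d :: real) else 0) \<le> ln (real n)" .
  qed
  also have "\<dots> \<le> (\<Sum>n\<in>A. ln t)"
  proof (rule sum_mono)
    fix n assume n: "n \<in> A"
    then show "ln (real n) \<le> ln t" using Apos[OF n] unfolding A_def by simp
  qed
  also have "\<dots> = ln t * real (cnt y (\<rho> * t) t)" unfolding cnt_def A_def by simp
  finally show ?thesis .
qed



definition gfun :: "real \<Rightarrow> nat \<Rightarrow> real" where
  "gfun \<theta> k = (1/2) * (\<theta>/2)^k / fact (Suc k)"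

lemma gfun_pos: "0 < \<theta> \<Longrightarrow> 0 < gfun \<theta> k"
  unfolding gfun_def by simp

lemma gfun_Suc: "gfun \<theta> (Suc k) = gfun \<theta> k * (\<theta> / (2 * (real k + 2)))"
proof -
  have "(fact (Suc (Suc k)) :: real) = (real k + 2) * fact (Suc k)"
    by (simp add: algebra_simps)
  then show ?thesis unfolding gfun_def by (simp add: field_simps)
qed

lemma gfun_mono: "0 < \<theta> \<Longrightarrow> \<theta> \<le> 1 \<Longrightarrow> gfun \<theta> (Suc k) \<le> gfun \<theta> k"
proof -
  assume a: "0 < \<theta>" "\<theta> \<le> 1"
  have "\<theta> / (2 * (real k + 2)) \<le> 1" using a by (simp add: field_simps)
  then have "gfun \<theta> k * (\<theta> / (2 * (real k + 2))) \<le> gfun \<theta> k * 1"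
    using gfun_pos[OF a(1), of k] by (intro mult_left_mono) auto
  then show ?thesis unfolding gfun_Suc by simp
qed

lemma lower_rec:
  assumes y: "1 < y" and th: "0 < \<theta>" "\<theta> \<le> 1/4" and ly: "12 \<le> \<theta> * ln y"
    and rho: "0 \<le> \<rho>" "\<rho> < 1" and T0: "2 / (1 - \<rho>) \<le> y powr \<theta>"
  shows "2 / (1 - \<rho>) \<le> t \<Longrightarrow> t \<le> y powr (1 + real k * (1 - 2*\<theta>)) \<Longrightarrow>
         (1 - \<rho>) * t * gfun \<theta> k \<le> real (cnt y (\<rho> * t) t)"
proof (induction k arbitrary: t)
  case 0
  have r1: "0 < 1 - \<rho>" using rho by simp
  have t2: "2 \<le> (1 - \<rho>) * t" using 0(1) r1 by (simp add: divide_le_eq mult.commute)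
  have ty: "t \<le> y" using 0(2) y by simp
  have tpos: "0 < t" using t2 r1 by (smt (verit) mult_nonneg_nonpos)
  have L0: "0 \<le> \<rho> * t" using rho tpos by simp
  have set: "{n::nat. \<rho> * t < real n \<and> real n \<le> t \<and> sm y n} = {n::nat. \<rho> * t < real n \<and> real n \<le> t}"
  proof (rule Collect_cong)
    fix n :: nat
    show "(\<rho> * t < real n \<and> real n \<le> t \<and> sm y n) = (\<rho> * t < real n \<and> real n \<le> t)"
    proof (intro iffI conjI)
      assume n: "\<rho> * t < real n \<and> real n \<le> t"
      have "0 < n" using n L0 by (intro Nat.gr0I) auto
      then show "sm y n" using n ty by (intro sm_le) auto
    qed auto
  qed
  have "t - \<rho> * t - 1 \<le> real (card {n::nat. \<rho> * t < real n \<and> real n \<le> t})"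
    using L0 rho tpos by (intro card_nat_interval) (auto simp: mult_left_le_one_le)
  then have "t - \<rho> * t - 1 \<le> real (cnt y (\<rho> * t) t)" unfolding cnt_def set .
  moreover have g0: "gfun \<theta> 0 = 1/2" unfolding gfun_def by simp
  ultimately show ?case using t2 unfolding g0 by (simp add: algebra_simps)
next
  case (Suc k)
  define \<alpha> where "\<alpha> = 1 - 2*\<theta>"
  have al: "1/2 \<le> \<alpha>" "\<alpha> \<le> 1" using th unfolding \<alpha>_def by auto
  have r1: "0 < 1 - \<rho>" using rho by simp
  have t2: "2 \<le> (1 - \<rho>) * t" using Suc(2) r1 by (simp add: divide_le_eq mult.commute)
  have tpos: "0 < t" using t2 r1 by (smt (verit) mult_nonneg_nonpos)
  have gk: "0 < gfun \<theta> k" by (rule gfun_pos[OF th(1)])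
  show ?case
  proof (cases "t \<le> y powr (1 + real k * (1 - 2*\<theta>))")
    case True
    have "(1 - \<rho>) * t * gfun \<theta> (Suc k) \<le> (1 - \<rho>) * t * gfun \<theta> k"
      using th r1 tpos by (intro mult_left_mono gfun_mono) auto
    also have "\<dots> \<le> real (cnt y (\<rho> * t) t)" using Suc(1)[OF Suc(2) True] .
    finally show ?thesis .
  next
    case False
    then have tbig: "y powr (1 + real k * \<alpha>) < t" unfolding \<alpha>_def by simp
    define D where "D = {d::nat. y powr \<alpha> < real d \<and> real d \<le> y powr (1 - \<theta>)}"
    have ypos: "0 < y" using y by simp
    have ya1: "1 \<le> y powr \<alpha>" using y al by (intro ge_one_powr_ge_zero) auto
    have yay: "y powr \<alpha> \<le> y powr (1 - \<theta>)" using y al th unfolding \<alpha>_def by (intro powr_mono) auto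
    have yty: "y powr (1 - \<theta>) \<le> y" using y th powr_mono[of "1 - \<theta>" 1 y] by simp
    have finD: "finite D"
      by (rule finite_subset[OF _ finite_nat_le_real[of "y powr (1-\<theta>)" "\<lambda>_. True"]]) (auto simp: D_def)
    have Dprop: "0 < d \<and> real d \<le> y" if "d \<in> D" for d
    proof -
      have "y powr \<alpha> < real d" "real d \<le> y powr (1 - \<theta>)" using that unfolding D_def by auto
      then show ?thesis using ya1 yty by (auto intro!: Nat.gr0I)
    qed
    have t1: "1 \<le> t"
    proof -
      have "1 \<le> y powr (1 + real k * \<alpha>)" using y al by (intro ge_one_powr_ge_zero) auto
      then show ?thesis using tbig by simp
    qed
    have IH: "(1 - \<rho>) * (t / real d) * gfun \<theta> k \<le> real (cnt y (\<rho> * (t / real d)) (t / real d))"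
      if d: "d \<in> D" for d
    proof (rule Suc(1))
      have dd: "y powr \<alpha> < real d" "real d \<le> y powr (1 - \<theta>)" using d unfolding D_def by auto
      have dpos: "0 < real d" using dd ya1 by simp
      have "y powr (1 + real k * \<alpha>) / y powr (1 - \<theta>) \<le> t / y powr (1 - \<theta>)"
        using tbig by (intro divide_right_mono) auto
      also have "\<dots> \<le> t / real d" using dd dpos tpos ypos by (intro divide_left_mono) auto
      finally have a: "y powr (1 + real k * \<alpha>) / y powr (1 - \<theta>) \<le> t / real d" .
      have "y powr (1 + real k * \<alpha>) / y powr (1 - \<theta>) = y powr (real k * \<alpha> + \<theta>)"
        using ypos by (simp add: powr_diff[symmetric])
      also have "\<dots> \<ge> y powr \<theta>" using y al by (intro powr_mono) auto
      finally show "2 / (1 - \<rho>) \<le> t / real d" using a T0 by linarith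
      have pp: "0 < real d * y powr \<alpha>" using dpos ya1 by (intro mult_pos_pos) auto
      have "t / real d \<le> t / y powr \<alpha>" using dd tpos pp by (intro divide_left_mono) auto
      also have "\<dots> \<le> y powr (1 + real (Suc k) * (1 - 2*\<theta>)) / y powr \<alpha>"
        using Suc(3) by (intro divide_right_mono) auto
      also have "\<dots> = y powr (1 + real k * (1 - 2*\<theta>))"
        using ypos by (simp add: powr_diff[symmetric] \<alpha>_def algebra_simps)
      finally show "t / real d \<le> y powr (1 + real k * (1 - 2*\<theta>))" .
    qed
    define X where "X = (1 - \<rho>) * t * gfun \<theta> k"
    have X0: "0 \<le> X" unfolding X_def using r1 tpos gk by simp
    have "(\<Sum>d\<in>D. mangoldt d * ((1 - \<rho>) * (t / real d) * gfun \<theta> k)) \<le>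
          (\<Sum>d\<in>D. mangoldt d * real (cnt y (\<rho> * (t / real d)) (t / real d)))"
      using IH by (intro sum_mono mult_left_mono) (auto simp: mangoldt_nonneg)
    also have "\<dots> \<le> ln t * real (cnt y (\<rho> * t) t)"
      using finD Dprop rho t1 by (intro cnt_rec) auto
    finally have s1: "(\<Sum>d\<in>D. mangoldt d * ((1 - \<rho>) * (t / real d) * gfun \<theta> k)) \<le> ln t * real (cnt y (\<rho> * t) t)" .
    have s2: "(\<Sum>d\<in>D. mangoldt d * ((1 - \<rho>) * (t / real d) * gfun \<theta> k)) = X * (\<Sum>d\<in>D. mangoldt d / real d)"
      unfolding sum_distrib_left by (rule sum.cong[OF refl]) (simp add: X_def divide_inverse mult_ac)
    have "ln (y powr (1 - \<theta>)) - ln (y powr \<alpha>) - 6 \<le> (\<Sum>d\<in>D. mangoldt d / real d)"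
      unfolding D_def using ya1 yay by (rule mertens_interval)
    moreover have "ln (y powr (1 - \<theta>)) - ln (y powr \<alpha>) = \<theta> * ln y"
      using ypos by (simp add: ln_powr \<alpha>_def algebra_simps)
    ultimately have s3: "\<theta> * ln y / 2 \<le> (\<Sum>d\<in>D. mangoldt d / real d)" using ly by linarith
    have "X * (\<theta> * ln y / 2) \<le> ln t * real (cnt y (\<rho> * t) t)"
      using s1 s2 s3 X0 by (smt (verit) mult_left_mono)
    moreover have "ln t \<le> (real k + 2) * ln y"
    proof -
      have yp: "0 < y powr (1 + real (Suc k) * (1 - 2*\<theta>))" using ypos by simp
      have "ln t \<le> ln (y powr (1 + real (Suc k) * (1 - 2*\<theta>)))"
        by (subst ln_le_cancel_iff[OF tpos yp]) (rule Suc(3))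
      also have "\<dots> = (1 + real (Suc k) * \<alpha>) * ln y" using ypos by (simp add: ln_powr \<alpha>_def)
      also have "\<dots> \<le> (real k + 2) * ln y"
      proof (intro mult_right_mono)
        show "1 + real (Suc k) * \<alpha> \<le> real k + 2" using al mult_left_le[of \<alpha> "real (Suc k)"] by simp
      qed (use y in simp)
      finally show ?thesis .
    qed
    ultimately have "X * (\<theta> * ln y / 2) \<le> (real k + 2) * ln y * real (cnt y (\<rho> * t) t)"
      by (smt (verit) mult_right_mono of_nat_0_le_iff)
    moreover have eq: "(X * (\<theta> / (2 * (real k + 2)))) * ((real k + 2) * ln y) = X * (\<theta> * ln y / 2)"
      by (simp add: field_simps)
    ultimately have "(X * (\<theta> / (2 * (real k + 2)))) * ((real k + 2) * ln y) \<le> real (cnt y (\<rho> * t) t) * ((real k + 2) * ln y)"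
      unfolding eq by (simp add: mult_ac)
    moreover have "0 < (real k + 2) * ln y" using y by simp
    ultimately have "X * (\<theta> / (2 * (real k + 2))) \<le> real (cnt y (\<rho> * t) t)"
      by (rule mult_right_le_imp_le)
    then show ?thesis unfolding X_def gfun_Suc by (simp add: algebra_simps)
  qed
qed

lemma ln2_ge_half: "1/2 \<le> ln (2::real)"
proof -
  have "ln (1/2::real) \<le> 1/2 - 1" by (rule ln_le_minus_one) simp
  moreover have "ln (1/2::real) = - ln 2" by (simp add: ln_div)
  ultimately show ?thesis by simp
qed

definition Sp :: "real \<Rightarrow> real \<Rightarrow> real" where
  "Sp \<eta> w = (\<Sum>p\<in>{p::nat. prime p \<and> real p \<le> w}. real p powr (\<eta> - 1))"

lemma finite_primes_le: "finite {p::nat. prime p \<and> real p \<le> w}"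
  using finite_nat_le_real[of w prime] by (simp add: conj_commute)

lemma block_recip:
  assumes z: "2 \<le> z"
  shows "(\<Sum>p\<in>{p::nat. prime p \<and> z < real p \<and> real p \<le> z^2}. 1 / real p) \<le> 10"
proof -
  define P where "P = {p::nat. prime p \<and> z < real p \<and> real p \<le> z^2}"
  define N where "N = nat \<lfloor>z^2\<rfloor>"
  have lz: "1/2 \<le> ln z" using ln2_ge_half z by (smt (verit) ln_le_cancel_iff)
  have finP: "finite P" unfolding P_def
    by (rule finite_subset[OF _ finite_primes_le[of "z^2"]]) auto
  have PN: "P \<subseteq> {1..N}"
  proof
    fix p assume p: "p \<in> P"
    then have "real p \<le> z^2" "prime p" unfolding P_def by auto
    moreover have "int p \<le> \<lfloor>z^2\<rfloor>" using calculation(1) by (simp add: le_floor_iff)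
    ultimately show "p \<in> {1..N}" unfolding N_def by (auto dest: prime_gt_0_nat simp: Suc_le_eq)
  qed
  have N1: "1 \<le> N" unfolding N_def using z by (simp add: le_nat_iff le_floor_iff)
  have "(\<Sum>p\<in>P. 1 / real p) \<le> (\<Sum>p\<in>P. (1 / ln z) * (mangoldt p / real p))"
  proof (rule sum_mono)
    fix p assume p: "p \<in> P"
    then have pp: "prime p" "z < real p" unfolding P_def by auto
    have "ln z \<le> ln (real p)" using pp z by simp
    then have "1 \<le> ln (real p) / ln z" using lz by simp
    then have "1 / real p \<le> (ln (real p) / ln z) / real p"
      using pp by (intro divide_right_mono) (auto simp: prime_gt_0_nat)
    then show "1 / real p \<le> (1 / ln z) * (mangoldt p / real p)" using pp by simp
  qed
  also have "\<dots> = (1 / ln z) * (\<Sum>p\<in>P. mangoldt p / real p)" by (simp add: sum_distrib_left)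
  also have "\<dots> \<le> (1 / ln z) * (\<Sum>d=1..N. mangoldt d / real d)"
    using lz PN by (intro mult_left_mono sum_mono2) (auto simp: mangoldt_nonneg)
  also have "\<dots> \<le> (1 / ln z) * (ln (real N) + 4)"
    using lz N1 by (intro mult_left_mono mertens_upper) auto
  also have "ln (real N) \<le> 2 * ln z"
  proof -
    have f0: "0 \<le> \<lfloor>z^2\<rfloor>" by simp
    have "real N = real_of_int \<lfloor>z^2\<rfloor>" unfolding N_def using f0 by simp
    then have "real N \<le> z^2" using of_int_floor_le[of "z^2"] by simp
    moreover have "0 < real N" using N1 by simp
    ultimately have "ln (real N) \<le> ln (z^2)" using ln_le_cancel_iff[of "real N" "z^2"] z by simp
    then show ?thesis using z by (simp add: ln_realpow)
  qed
  then have "(1 / ln z) * (ln (real N) + 4) \<le> (1 / ln z) * (2 * ln z + 4)"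
    using lz by (intro mult_left_mono) auto
  also have "\<dots> = 2 + 4 / ln z" using lz by (simp add: field_simps)
  also have "\<dots> \<le> 10" using lz by (simp add: field_simps)
  finally show ?thesis unfolding P_def by simp
qed

lemma Sp_nonneg: "0 \<le> Sp \<eta> w"
  unfolding Sp_def by (intro sum_nonneg) auto

lemma Sp_small:
  assumes "\<eta> \<le> 1" "w < 4"
  shows "Sp \<eta> w \<le> 2"
proof -
  have sub: "{p::nat. prime p \<and> real p \<le> w} \<subseteq> {2,3}"
  proof
    fix p assume "p \<in> {p::nat. prime p \<and> real p \<le> w}"
    then have p: "prime p" "p < 4" using assms by auto
    then have "p \<noteq> 0" "p \<noteq> 1" by auto
    moreover have "p \<noteq> 4" using p by simp
    ultimately show "p \<in> {2,3}" using p(2) by auto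
  qed
  have "Sp \<eta> w \<le> (\<Sum>p\<in>{p::nat. prime p \<and> real p \<le> w}. 1)"
    unfolding Sp_def
  proof (rule sum_mono)
    fix p assume "p \<in> {p::nat. prime p \<and> real p \<le> w}"
    then have "1 \<le> real p" by (auto dest: prime_gt_0_nat simp: Suc_le_eq)
    then show "real p powr (\<eta> - 1) \<le> 1" using assms powr_mono[of "\<eta> - 1" 0 "real p"] by simp
  qed
  also have "\<dots> = real (card {p::nat. prime p \<and> real p \<le> w})" by simp
  also have "\<dots> \<le> real (card {2::nat,3})" using sub by (intro of_nat_mono card_mono) auto
  finally show ?thesis by simp
qed


lemma Sp_step:
  assumes eta: "0 < \<eta>" "\<eta> \<le> 1" and w: "4 \<le> w"
  shows "Sp \<eta> w \<le> Sp \<eta> (sqrt w) + 10 * w powr \<eta>"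
proof -
  define z where "z = sqrt w"
  have z2: "2 \<le> z" unfolding z_def using w real_sqrt_le_mono[of 4 w] by simp
  have zw: "z^2 = w" unfolding z_def using w by simp
  define P2 where "P2 = {p::nat. prime p \<and> z < real p \<and> real p \<le> z^2}"
  have "z * 1 \<le> z * z" using z2 by (intro mult_left_mono) auto
  then have zlew: "z \<le> w" using zw by (simp add: power2_eq_square)
  have split: "{p::nat. prime p \<and> real p \<le> w} = {p::nat. prime p \<and> real p \<le> z} \<union> P2"
    unfolding P2_def zw using zlew by auto
  have finP2: "finite P2" unfolding P2_def
    by (rule finite_subset[OF _ finite_primes_le[of "z^2"]]) auto
  have disj: "{p::nat. prime p \<and> real p \<le> z} \<inter> P2 = {}" unfolding P2_def by auto
  have "Sp \<eta> w = Sp \<eta> z + (\<Sum>p\<in>P2. real p powr (\<eta> - 1))"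
    unfolding Sp_def split
    by (rule sum.union_disjoint[OF finite_primes_le finP2 disj])
  also have "(\<Sum>p\<in>P2. real p powr (\<eta> - 1)) \<le> (\<Sum>p\<in>P2. w powr \<eta> * (1 / real p))"
  proof (rule sum_mono)
    fix p assume p: "p \<in> P2"
    then have pp: "prime p" "real p \<le> w" unfolding P2_def zw by auto
    have p0: "0 < real p" using pp by (simp add: prime_gt_0_nat)
    have "real p powr (\<eta> - 1) = real p powr \<eta> / real p"
      using p0 by (simp add: powr_diff)
    also have "\<dots> \<le> w powr \<eta> / real p"
      using p0 pp eta by (intro divide_right_mono powr_mono2) auto
    finally show "real p powr (\<eta> - 1) \<le> w powr \<eta> * (1 / real p)" by simp
  qed
  also have "\<dots> = w powr \<eta> * (\<Sum>p\<in>P2. 1 / real p)" by (simp add: sum_distrib_left)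
  also have "\<dots> \<le> w powr \<eta> * 10"
    using block_recip[OF z2] unfolding P2_def by (intro mult_left_mono) auto
  finally show ?thesis unfolding z_def by simp
qed

lemma Sp_bound:
  assumes eta: "0 < \<eta>" "\<eta> \<le> 1"
  shows "1 \<le> w \<Longrightarrow> w \<le> 2^(2^N) \<Longrightarrow> Sp \<eta> w \<le> 10 * w powr \<eta> + 10 * real N * w powr (\<eta>/2) + 2"
proof (induction N arbitrary: w)
  case 0
  then have s2: "Sp \<eta> w \<le> 2" using eta by (intro Sp_small) auto
  have "0 \<le> w powr \<eta>" by simp
  then have "Sp \<eta> w \<le> 10 * w powr \<eta> + 2" using s2 by linarith
  then show ?case by simp
next
  case (Suc N)
  show ?case
  proof (cases "w < 4")
    case True
    then have s2: "Sp \<eta> w \<le> 2" using eta by (intro Sp_small) auto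
    have "0 \<le> w powr \<eta>" "0 \<le> w powr (\<eta>/2)" "0 \<le> 10 * real (Suc N)" by simp_all
    then have "0 \<le> 10 * w powr \<eta> + 10 * real (Suc N) * w powr (\<eta>/2)" by simp
    then show ?thesis using s2 by linarith
  next
    case False
    then have w4: "4 \<le> w" by simp
    have sq1: "1 \<le> sqrt w" using Suc(2) by simp
    have "sqrt w \<le> sqrt ((2^(2^N))^2)"
    proof -
      have "(2::real)^(2^(Suc N)) = (2^(2^N))^2" by (simp add: power_mult[symmetric])
      then have "w \<le> (2^(2^N))^2" using Suc(3) by simp
      then show ?thesis by (rule real_sqrt_le_mono)
    qed
    also have "\<dots> = 2^(2^N)" by simp
    finally have sq2: "sqrt w \<le> 2^(2^N)" .
    have IH: "Sp \<eta> (sqrt w) \<le> 10 * sqrt w powr \<eta> + 10 * real N * sqrt w powr (\<eta>/2) + 2"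
      by (rule Suc(1)[OF sq1 sq2])
    have e1: "sqrt w powr \<eta> = w powr (\<eta>/2)"
      using w4 by (simp add: powr_half_sqrt[symmetric] powr_powr)
    have e2: "sqrt w powr (\<eta>/2) \<le> w powr (\<eta>/2)"
    proof -
      have "sqrt w powr (\<eta>/2) = w powr (\<eta>/4)"
        using w4 by (simp add: powr_half_sqrt[symmetric] powr_powr)
      also have "\<dots> \<le> w powr (\<eta>/2)" using w4 eta by (intro powr_mono) auto
      finally show ?thesis .
    qed
    have "Sp \<eta> w \<le> Sp \<eta> (sqrt w) + 10 * w powr \<eta>" by (rule Sp_step[OF eta w4])
    also have "\<dots> \<le> 10 * w powr (\<eta>/2) + 10 * real N * w powr (\<eta>/2) + 2 + 10 * w powr \<eta>"
      using IH e1 e2 mult_left_mono[OF e2, of "10 * real N"] by simp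
    also have "\<dots> = 10 * w powr \<eta> + 10 * real (Suc N) * w powr (\<eta>/2) + 2"
      by (simp add: algebra_simps)
    finally show ?thesis .
  qed
qed

lemma recip_le_exp: "0 \<le> (z::real) \<Longrightarrow> z \<le> 3/4 \<Longrightarrow> 1 / (1 - z) \<le> exp (4 * z)"
proof -
  assume z: "0 \<le> z" "z \<le> 3/4"
  have "z * (4 * z) \<le> z * 3" using z by (intro mult_left_mono) auto
  then have "1 \<le> (1 + 4 * z) * (1 - z)" by (simp add: algebra_simps)
  also have "\<dots> \<le> exp (4 * z) * (1 - z)" using z by (intro mult_right_mono) (auto simp: exp_ge_add_one_self)
  finally have "1 \<le> exp (4 * z) * (1 - z)" .
  then show ?thesis using z by (simp add: divide_le_eq mult.commute)
qed

lemma real_powr_power_nat: "0 < (x::real) \<Longrightarrow> (x ^ m) powr a = (x powr a) ^ m"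
proof -
  assume x: "0 < x"
  have "(x ^ m) powr a = (x powr real m) powr a" using x by (simp add: powr_realpow)
  also have "\<dots> = x powr (real m * a)" by (simp add: powr_powr)
  also have "\<dots> = (x powr a) ^ m" using x by (simp add: powr_power)
  finally show ?thesis .
qed

lemma multiplicity_le_self:
  assumes "prime p" "0 < n"
  shows "multiplicity p n \<le> (n::nat)"
proof -
  have "multiplicity p n < 2 ^ multiplicity p n" by (rule less_exp)
  also have "(2::nat) ^ multiplicity p n \<le> p ^ multiplicity p n"
    using assms by (intro power_mono) (auto simp: prime_ge_2_nat)
  also have "\<dots> \<le> n" using assms by (intro dvd_imp_le multiplicity_dvd) auto
  finally show ?thesis by simp
qed

lemma rankin:
  assumes x: "1 \<le> x" and eta: "0 < \<eta>" "\<eta> \<le> 1/2"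
  shows "real (card {n::nat. 0 < n \<and> real n \<le> x \<and> sm y n}) \<le> x powr (1 - \<eta>) * exp (4 * Sp \<eta> y)"
proof -
  define SM where "SM = {n::nat. 0 < n \<and> real n \<le> x \<and> sm y n}"
  define P where "P = {p::nat. prime p \<and> real p \<le> y}"
  define K where "K = nat \<lfloor>x\<rfloor>"
  define z where "z = (\<lambda>p::nat. real p powr (\<eta> - 1))"
  have finSM: "finite SM" unfolding SM_def
    using finite_nat_le_real[of x "\<lambda>n. 0 < n \<and> sm y n"] by (simp add: conj_commute conj_left_commute)
  have finP: "finite P" unfolding P_def by (rule finite_primes_le)
  have zpos: "0 < z p" if "p \<in> P" for p
    using that unfolding z_def P_def by (simp add: prime_gt_0_nat)
  have zle: "z p \<le> 3/4" if "p \<in> P" for p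
  proof -
    have p2: "2 \<le> real p" using that unfolding P_def by (simp add: prime_ge_2_nat)
    have "z p \<le> real p powr (-(1/2))" unfolding z_def
      by (rule powr_mono) (use p2 eta in auto)
    also have "\<dots> = 1 / real p powr (1/2)" by (rule powr_minus_divide)
    also have "\<dots> = 1 / sqrt (real p)" using p2 by (simp add: powr_half_sqrt)
    also have "\<dots> \<le> 1 / sqrt 2"
      by (rule frac_le) (use p2 in auto)
    also have "\<dots> \<le> 1 / (4/3)"
    proof (rule frac_le)
      show "4/3 \<le> sqrt (2::real)" by (rule real_le_rsqrt) (simp add: power2_eq_square)
    qed auto
    finally show ?thesis by simp
  qed
  have "real (card SM) = (\<Sum>n\<in>SM. 1)" by simp
  also have "\<dots> \<le> (\<Sum>n\<in>SM. x powr (1 - \<eta>) * real n powr (\<eta> - 1))"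
  proof (rule sum_mono)
    fix n assume n: "n \<in> SM"
    then have n0: "0 < real n" and nx: "real n \<le> x" unfolding SM_def by auto
    have e1: "real n powr (\<eta> - 1) = 1 / real n powr (1 - \<eta>)"
      using powr_minus_divide[of "real n" "1 - \<eta>"] by simp
    have e2: "(x / real n) powr (1 - \<eta>) = x powr (1 - \<eta>) / real n powr (1 - \<eta>)"
      using n0 x by (intro powr_divide)
    have "x powr (1 - \<eta>) * real n powr (\<eta> - 1) = (x / real n) powr (1 - \<eta>)"
      unfolding e1 e2 by simp
    moreover have "1 \<le> (x / real n) powr (1 - \<eta>)"
      using n0 nx eta by (intro ge_one_powr_ge_zero) (auto simp: field_simps)
    ultimately show "1 \<le> x powr (1 - \<eta>) * real n powr (\<eta> - 1)" by simp
  qed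
  also have "\<dots> = x powr (1 - \<eta>) * (\<Sum>n\<in>SM. real n powr (\<eta> - 1))" by (simp add: sum_distrib_left)
  finally have a: "real (card SM) \<le> x powr (1 - \<eta>) * (\<Sum>n\<in>SM. real n powr (\<eta> - 1))" .
  define \<phi> where "\<phi> = (\<lambda>n::nat. restrict (\<lambda>p. multiplicity p n) P)"
  define F where "F = (\<lambda>g. \<Prod>p\<in>P. z p ^ g p)"
  have pf_sub: "prime_factors n \<subseteq> P" if "n \<in> SM" for n
    using that unfolding SM_def P_def sm_def by (auto simp: in_prime_factors_iff)
  have key: "real n powr (\<eta> - 1) = F (\<phi> n)" if n: "n \<in> SM" for n
  proof -
    have n0: "0 < n" using n unfolding SM_def by auto
    have "n = (\<Prod>p\<in>prime_factors n. p ^ multiplicity p n)" using n0 by (rule prime_factorization_nat)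
    also have "\<dots> = (\<Prod>p\<in>P. p ^ multiplicity p n)"
    proof (rule prod.mono_neutral_left[OF finP pf_sub[OF n]])
      show "\<forall>i\<in>P - prime_factors n. i ^ multiplicity i n = 1"
      proof
        fix i assume "i \<in> P - prime_factors n"
        then have "prime i" "\<not> i dvd n" using n0 unfolding P_def by (auto simp: in_prime_factors_iff)
        then have "multiplicity i n = 0" by (simp add: not_dvd_imp_multiplicity_0)
        then show "i ^ multiplicity i n = 1" by simp
      qed
    qed
    finally have "real n = real (\<Prod>p\<in>P. p ^ multiplicity p n)" by (rule arg_cong)
    also have "\<dots> = (\<Prod>p\<in>P. real p ^ multiplicity p n)" by (simp only: of_nat_prod of_nat_power)
    finally have "real n = (\<Prod>p\<in>P. real p ^ multiplicity p n)" .
    then have "real n powr (\<eta> - 1) = (\<Prod>p\<in>P. (real p ^ multiplicity p n) powr (\<eta> - 1))"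
      by (simp add: prod_powr_distrib)
    also have "\<dots> = (\<Prod>p\<in>P. z p ^ multiplicity p n)"
    proof (rule prod.cong[OF refl])
      fix p assume "p \<in> P"
      then have "0 < real p" unfolding P_def by (simp add: prime_gt_0_nat)
      then show "(real p ^ multiplicity p n) powr (\<eta> - 1) = z p ^ multiplicity p n"
        unfolding z_def by (rule real_powr_power_nat)
    qed
    also have "\<dots> = F (\<phi> n)" unfolding F_def \<phi>_def by (intro prod.cong refl) simp
    finally show ?thesis .
  qed
  have inj: "inj_on \<phi> SM"
  proof (rule inj_onI)
    fix n m assume n: "n \<in> SM" and m: "m \<in> SM" and eq: "\<phi> n = \<phi> m"
    have n0: "0 < n" "0 < m" using n m unfolding SM_def by auto
    show "n = m"
    proof (rule multiplicity_eq_nat[OF n0])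
      fix p :: nat assume p: "prime p"
      show "multiplicity p n = multiplicity p m"
      proof (cases "p \<in> P")
        case True
        then show ?thesis using fun_cong[OF eq, of p] unfolding \<phi>_def by simp
      next
        case False
        then have "p \<notin> prime_factors n" "p \<notin> prime_factors m" using pf_sub n m by auto
        then have "\<not> p dvd n" "\<not> p dvd m" using p n0 by (auto simp: in_prime_factors_iff)
        then show ?thesis by (simp add: not_dvd_imp_multiplicity_0)
      qed
    qed
  qed
  have img: "\<phi> ` SM \<subseteq> PiE P (\<lambda>_. {0..K})"
  proof
    fix g assume "g \<in> \<phi> ` SM"
    then obtain n where n: "n \<in> SM" and g: "g = \<phi> n" by auto
    have n0: "0 < n" and nx: "real n \<le> x" using n unfolding SM_def by auto
    have nK: "n \<le> K" unfolding K_def using nx by (simp add: le_nat_iff le_floor_iff)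
    show "g \<in> PiE P (\<lambda>_. {0..K})" unfolding g \<phi>_def
    proof (rule restrict_PiE_iff[THEN iffD2], intro ballI)
      fix p assume "p \<in> P"
      then have "prime p" unfolding P_def by simp
      then have "multiplicity p n \<le> n" using n0 by (rule multiplicity_le_self)
      then show "multiplicity p n \<in> {0..K}" using nK by simp
    qed
  qed
  have Fnn: "0 \<le> F g" for g unfolding F_def using zpos by (intro prod_nonneg) (auto intro: less_imp_le)
  have "(\<Sum>n\<in>SM. real n powr (\<eta> - 1)) = (\<Sum>n\<in>SM. F (\<phi> n))" using key by (rule sum.cong[OF refl])
  also have "\<dots> = (\<Sum>g\<in>\<phi> ` SM. F g)" using inj by (simp add: sum.reindex)
  also have "\<dots> \<le> (\<Sum>g\<in>PiE P (\<lambda>_. {0..K}). F g)"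
    using img Fnn finP by (intro sum_mono2) (auto intro: finite_PiE)
  also have "\<dots> = (\<Prod>p\<in>P. \<Sum>k\<in>{0..K}. z p ^ k)"
    unfolding F_def using finP by (subst prod_sum_PiE) auto
  also have "\<dots> \<le> (\<Prod>p\<in>P. exp (4 * z p))"
  proof (rule prod_mono)
    fix p assume p: "p \<in> P"
    have "(\<Sum>k\<in>{0..K}. z p ^ k) \<le> 1 / (1 - z p)"
      using zpos[OF p] zle[OF p] by (intro less_imp_le geometric_sum_less) auto
    also have "\<dots> \<le> exp (4 * z p)" using zpos[OF p] zle[OF p] by (intro recip_le_exp) auto
    finally show "0 \<le> (\<Sum>k\<in>{0..K}. z p ^ k) \<and> (\<Sum>k\<in>{0..K}. z p ^ k) \<le> exp (4 * z p)"
      using zpos[OF p] by (auto intro!: sum_nonneg)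
  qed
  also have "\<dots> = exp (4 * Sp \<eta> y)"
    unfolding Sp_def P_def[symmetric] z_def using finP by (simp add: exp_sum sum_distrib_left)
  finally have b: "(\<Sum>n\<in>SM. real n powr (\<eta> - 1)) \<le> exp (4 * Sp \<eta> y)" .
  have "real (card SM) \<le> x powr (1 - \<eta>) * exp (4 * Sp \<eta> y)"
    using a mult_left_mono[OF b powr_ge_zero[of x "1 - \<eta>"]] by (rule order_trans)
  then show ?thesis unfolding SM_def .
qed

lemma smooth_neg_nat: "smooth B (- int n) \<longleftrightarrow> sm B n"
proof
  assume h: "smooth B (- int n)"
  show "sm B n" unfolding sm_def
  proof (intro allI impI)
    fix q :: nat assume q: "prime q \<and> q dvd n"
    then have "prime (int q)" "int q dvd - int n" by auto
    then have "real_of_int (int q) \<le> B" using h unfolding smooth_def by blast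
    then show "real q \<le> B" by simp
  qed
next
  assume h: "sm B n"
  show "smooth B (- int n)" unfolding smooth_def
  proof (intro allI impI)
    fix p :: int assume p: "prime p \<and> p dvd - int n"
    then have p0: "0 \<le> p" and pn: "prime (nat p)" using prime_int_nat_transfer by blast+
    have "int (nat p) dvd int n" using p p0 by simp
    then have "nat p dvd n" by (simp only: int_dvd_int_iff)
    then have "real (nat p) \<le> B" using h pn unfolding sm_def by blast
    then show "real_of_int p \<le> B" using p0 by simp
  qed
qed

lemma m_range_eq: "m_range n \<delta> = {\<lceil>2 powr (-1 / (\<delta> * (ln (real n) / ln (ln (real n))) powr (1/3))) * Lfun (real n) (2/3) (1/\<delta>)\<rceil>..\<lfloor>Lfun (real n) (2/3) (1/\<delta>)\<rfloor>}"
  unfolding m_range_def Let_def by (auto simp: ceiling_le_iff le_floor_iff)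

lemma card_pairs:
  fixes b m1 m2 :: int
  assumes b: "0 < b" and m1: "1 \<le> m1"
  shows "card {(a, m). a \<in> {0..<b} \<and> m \<in> {m1..m2} \<and> smooth B (a - b * m)}
       = cnt B (real_of_int (b * (m1 - 1))) (real_of_int (b * m2))"
proof -
  define A where "A = {(a, m). a \<in> {0..<b} \<and> m \<in> {m1..m2} \<and> smooth B (a - b * m)}"
  define N where "N = {n::nat. real_of_int (b * (m1 - 1)) < real n \<and> real n \<le> real_of_int (b * m2) \<and> sm B n}"
  define f where "f = (\<lambda>(a::int, m::int). nat (b * m - a))"
  define g where "g = (\<lambda>n::nat. (b * ((int n + b - 1) div b) - int n, (int n + b - 1) div b))"
  have bij: "bij_betw f A N"
  proof (rule bij_betw_byWitness[where f' = g])
    show "\<forall>x\<in>A. g (f x) = x"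
    proof
      fix x assume "x \<in> A"
      then obtain a m where x: "x = (a, m)" and a: "0 \<le> a" "a < b" and m: "m1 \<le> m" "m \<le> m2"
        unfolding A_def by auto
      have pos: "0 \<le> b * m - a" using a m m1 b by (smt (verit) mult_le_cancel_left1)
      have "(int (nat (b * m - a)) + b - 1) div b = ((b - 1 - a) + m * b) div b"
        using pos by (simp add: algebra_simps)
      also have "\<dots> = (b - 1 - a) div b + m" using b by simp
      also have "(b - 1 - a) div b = 0" using a by (intro div_pos_pos_trivial) auto
      finally have q: "(int (nat (b * m - a)) + b - 1) div b = m" by simp
      show "g (f x) = x" unfolding x f_def g_def using q pos by simp
    qed
    show "\<forall>y\<in>N. f (g y) = y"
    proof
      fix y assume "y \<in> N"
      have "b * ((int y + b - 1) div b) - int y \<ge> 0 \<or> True" by simp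
      define q where "q = (int y + b - 1) div b"
      define r where "r = (int y + b - 1) mod b"
      have qr: "int y + b - 1 = b * q + r" unfolding q_def r_def by simp
      have r: "0 \<le> r" "r < b" unfolding r_def using b by auto
      have "b * q - (b * q - int y) = int y" by simp
      then show "f (g y) = y" unfolding f_def g_def q_def[symmetric] by simp
    qed
    show "f ` A \<subseteq> N"
    proof
      fix z assume "z \<in> f ` A"
      then obtain a m where a: "0 \<le> a" "a < b" and m: "m1 \<le> m" "m \<le> m2" and sm: "smooth B (a - b * m)"
        and z: "z = nat (b * m - a)" unfolding A_def f_def by auto
      have pos: "0 \<le> b * m - a" using a m m1 b by (smt (verit) mult_le_cancel_left1)
      have zi: "int z = b * m - a" using pos z by simp
      have "b * (m1 - 1) < b * m - a"
      proof -
        have "b * m1 \<le> b * m" using m b by (intro mult_left_mono) auto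
        moreover have "b * (m1 - 1) = b * m1 - b" by (simp add: algebra_simps)
        ultimately show ?thesis using a by linarith
      qed
      then have l: "real_of_int (b * (m1 - 1)) < real z" using zi by (metis of_int_less_iff of_int_of_nat_eq)
      have "b * m - a \<le> b * m2" using a m b by (smt (verit) mult_left_mono)
      then have u: "real z \<le> real_of_int (b * m2)" using zi by (metis of_int_le_iff of_int_of_nat_eq)
      have "a - b * m = - int z" using zi by simp
      then have "sm B z" using sm smooth_neg_nat by metis
      then show "z \<in> N" unfolding N_def using l u by simp
    qed
    show "g ` N \<subseteq> A"
    proof
      fix x assume "x \<in> g ` N"
      then obtain y where y: "y \<in> N" and x: "x = g y" by auto
      have yN: "real_of_int (b * (m1 - 1)) < real y" "real y \<le> real_of_int (b * m2)" "sm B y"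
        using y unfolding N_def by auto
      have e: "real y = real_of_int (int y)" by simp
      have yl: "b * (m1 - 1) < int y" using yN(1)[unfolded e of_int_less_iff] .
      have yu: "int y \<le> b * m2" using yN(2)[unfolded e of_int_le_iff] .
      have smy: "sm B y" by (rule yN(3))
      define q where "q = (int y + b - 1) div b"
      define r where "r = (int y + b - 1) mod b"
      have qr: "int y + b - 1 = b * q + r" unfolding q_def r_def by simp
      have r: "0 \<le> r" "r < b" unfolding r_def using b by auto
      have a1: "0 \<le> b * q - int y" using qr r by linarith
      have a2: "b * q - int y < b" using qr r by linarith
      have q1: "m1 \<le> q"
      proof -
        have "b * (m1 - 1) < b * q" using yl a1 by linarith
        then have "m1 - 1 < q" using b by (simp add: mult_less_cancel_left)
        then show ?thesis by simp
      qed
      have q2: "q \<le> m2"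
      proof -
        have "b * q < b * (m2 + 1)" using yu qr r by (simp add: algebra_simps)
        then have "q < m2 + 1" using b by (simp add: mult_less_cancel_left)
        then show ?thesis by simp
      qed
      have "smooth B ((b * q - int y) - b * q)" using smy smooth_neg_nat by simp
      then show "x \<in> A" unfolding A_def x g_def q_def[symmetric] using a1 a2 q1 q2 by simp
    qed
  qed
  then have "card A = card N" by (rule bij_betw_same_card)
  then show ?thesis unfolding A_def N_def cnt_def .
qed

lemma smooth_prob_eq:
  fixes b m1 m2 :: int
  assumes b: "0 < b" and m1: "1 \<le> m1" and m12: "m1 \<le> m2" and MR: "m_range n \<delta> = {m1..m2}"
  shows "smooth_prob n \<delta> \<beta> b = real (cnt (Lfun (real n) (1/3) \<beta>) (real_of_int (b * (m1 - 1))) (real_of_int (b * m2)))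
           / (real_of_int b * real_of_int (m2 - m1 + 1))"
proof -
  have c1: "real (card {0..<b}) = real_of_int b" using b by simp
  have c2: "real (card {m1..m2}) = real_of_int (m2 - m1 + 1)" using m12 by simp
  show ?thesis unfolding smooth_prob_def MR c1 c2 card_pairs[OF b m1] ..
qed

definition LYf :: "real \<Rightarrow> real \<Rightarrow> real" where "LYf \<beta> x = \<beta> * x powr (1/3) * ln x powr (2/3)"
definition LHf :: "real \<Rightarrow> real \<Rightarrow> real" where "LHf \<delta> x = (1/\<delta>) * x powr (2/3) * ln x powr (1/3)"
definition Df :: "real \<Rightarrow> real \<Rightarrow> real" where "Df \<delta> x = \<delta> * (x / ln x) powr (1/3)"
definition Ef :: "real \<Rightarrow> real" where "Ef x = x powr (1/3) * ln x powr (2/3)"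
definition u0f :: "real \<Rightarrow> real \<Rightarrow> real \<Rightarrow> real" where "u0f \<beta> \<delta> x = LHf \<delta> x / LYf \<beta> x"
definition Kf :: "real \<Rightarrow> real \<Rightarrow> real \<Rightarrow> real \<Rightarrow> real \<Rightarrow> real" where "Kf \<sigma> \<beta> \<delta> a x = (\<sigma>/\<beta> + u0f \<beta> \<delta> x) / a + 1"

context
  fixes \<beta> \<delta> \<sigma> th a :: real
  assumes pos: "\<beta> > 0" "\<delta> > 0" "\<sigma> > 0" "th > 0" "a > 0"
begin

lemma F1: "eventually (\<lambda>x. 1 \<le> Df \<delta> x) at_top"
  unfolding Df_def using pos by real_asymp

lemma F2: "eventually (\<lambda>x. 16 * Df \<delta> x \<le> exp (LHf \<delta> x)) at_top"
  unfolding Df_def LHf_def using pos by real_asymp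

lemma F3: "eventually (\<lambda>x. 12 \<le> th * LYf \<beta> x) at_top"
  unfolding LYf_def using pos by real_asymp

lemma F4: "eventually (\<lambda>x. 16 * Df \<delta> x \<le> exp (th * LYf \<beta> x)) at_top"
  unfolding Df_def LYf_def using pos by real_asymp

lemma F5lim: "((\<lambda>x. (ln 2 + Kf \<sigma> \<beta> \<delta> a x * ln (2/th) + (Kf \<sigma> \<beta> \<delta> a x + 1) * ln (Kf \<sigma> \<beta> \<delta> a x + 1))
      / ((1/(3*\<beta>*\<delta>)) * Ef x)) \<longlongrightarrow> 1/a) at_top"
  unfolding Kf_def u0f_def LHf_def LYf_def Ef_def using pos by (real_asymp simp add: field_simps)

lemma F6a: "eventually (\<lambda>x. 1 < u0f \<beta> \<delta> x) at_top"
  unfolding u0f_def LHf_def LYf_def using pos by real_asymp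

lemma F6b: "eventually (\<lambda>x. ln (u0f \<beta> \<delta> x) / LYf \<beta> x \<le> 1/2) at_top"
  unfolding u0f_def LHf_def LYf_def using pos by real_asymp

lemma F7: "eventually (\<lambda>x. ln 2 \<le> LYf \<beta> x) at_top"
  unfolding LYf_def using pos by real_asymp

lemma F8lim: "((\<lambda>x. (ln (u0f \<beta> \<delta> x) / LYf \<beta> x * (LHf \<delta> x - ln 2) - ln (8 * Df \<delta> x)
      - 4 * (10 * u0f \<beta> \<delta> x + 10 * (log 2 (LYf \<beta> x / ln 2) + 1) * sqrt (u0f \<beta> \<delta> x) + 2))
      / ((1/(3*\<beta>*\<delta>)) * Ef x)) \<longlongrightarrow> 1) at_top"
  unfolding u0f_def LHf_def LYf_def Ef_def Df_def log_def using pos by (real_asymp simp add: field_simps)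

lemma F9: "eventually (\<lambda>x. 0 < Ef x) at_top"
  unfolding Ef_def by real_asymp

end

lemma Lfun_third: "Lfun z (1/3) c = exp (c * ln z powr (1/3) * ln (ln z) powr (2/3))"
proof -
  have "(1::real) - 1/3 = 2/3" by simp
  then show ?thesis unfolding Lfun_def by simp
qed

lemma Lfun_twothird: "Lfun z (2/3) c = exp (c * ln z powr (2/3) * ln (ln z) powr (1/3))"
proof -
  have "(1::real) - 2/3 = 1/3" by simp
  then show ?thesis unfolding Lfun_def by simp
qed

lemma gfun_lower:
  assumes th: "0 < \<theta>" "\<theta> \<le> 1" and kK: "real k \<le> K"
  shows "exp (- (ln 2 + K * ln (2/\<theta>) + (K + 1) * ln (K + 1))) \<le> gfun \<theta> k"
proof -
  have l2: "0 \<le> ln (2/\<theta>)" using th by simp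
  have K0: "0 \<le> K" using kK by linarith
  have "(\<theta>/2)^k = exp (- (real k * ln (2/\<theta>)))"
  proof -
    have "(\<theta>/2)^k = exp (real k * ln (\<theta>/2))" using th by (simp add: exp_of_nat_mult)
    also have "ln (\<theta>/2) = - ln (2/\<theta>)" using th by (simp add: ln_div)
    finally show ?thesis by simp
  qed
  also have "\<dots> \<ge> exp (- (K * ln (2/\<theta>)))" using kK l2 by (simp add: mult_right_mono)
  finally have a: "exp (- (K * ln (2/\<theta>))) \<le> (\<theta>/2)^k" .
  have "(fact (Suc k) :: real) \<le> real (Suc k) ^ Suc k"
    by (metis fact_le_power of_nat_fact of_nat_le_iff of_nat_power)
  also have "\<dots> = exp (real (Suc k) * ln (real (Suc k)))"
    by (subst exp_of_nat_mult) simp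
  also have "\<dots> \<le> exp ((K + 1) * ln (K + 1))"
  proof -
    have f1: "real (Suc k) \<le> K + 1" using kK by simp
    have f2: "0 \<le> ln (real (Suc k))" by simp
    have f3: "ln (real (Suc k)) \<le> ln (K + 1)" using kK by simp
    have "real (Suc k) * ln (real (Suc k)) \<le> (K + 1) * ln (K + 1)"
      by (rule mult_mono[OF f1 f3]) (use K0 f2 in auto)
    then show ?thesis by simp
  qed
  finally have b: "(fact (Suc k) :: real) \<le> exp ((K + 1) * ln (K + 1))" .
  have "exp (- (ln 2 + K * ln (2/\<theta>) + (K + 1) * ln (K + 1)))
      = (1/2) * exp (- (K * ln (2/\<theta>))) / exp ((K + 1) * ln (K + 1))"
    by (simp add: exp_diff exp_minus exp_add field_simps)
  also have "\<dots> \<le> (1/2) * (\<theta>/2)^k / fact (Suc k)"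
    using a b th by (intro frac_le) auto
  finally show ?thesis unfolding gfun_def .
qed

lemma core_lower:
  fixes b m1 m2 :: int and k :: nat
  assumes y: "1 < y" and th: "0 < \<theta>" "\<theta> \<le> 1/4" and ly: "12 \<le> \<theta> * ln y"
    and b: "0 < b" and m1: "1 \<le> m1" and m12: "m1 \<le> m2"
    and two: "2 \<le> real_of_int b * real_of_int (m2 - m1 + 1)"
    and T0: "2 * real_of_int m2 \<le> y powr \<theta> * real_of_int (m2 - m1 + 1)"
    and Tk: "real_of_int (b * m2) \<le> y powr (1 + real k * (1 - 2*\<theta>))"
  shows "gfun \<theta> k \<le> real (cnt y (real_of_int (b*(m1-1))) (real_of_int (b*m2))) / (real_of_int b * real_of_int (m2 - m1 + 1))"
proof -
  define T where "T = real_of_int (b*m2)"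
  define L where "L = real_of_int (b*(m1-1))"
  define W where "W = real_of_int b * real_of_int (m2 - m1 + 1)"
  define \<rho> where "\<rho> = L / T"
  have bpos: "0 < real_of_int b" using b by simp
  have m2pos: "0 < real_of_int m2" using m1 m12 by simp
  have Tpos: "0 < T" unfolding T_def using bpos m2pos by simp
  have L0: "0 \<le> L" unfolding L_def using b m1 by simp
  have TLW: "T - L = W" unfolding T_def L_def W_def by (simp add: algebra_simps)
  have Wpos: "0 < W" using two unfolding W_def by simp
  have rho0: "0 \<le> \<rho>" unfolding \<rho>_def using L0 Tpos by simp
  have rhoT: "\<rho> * T = L" unfolding \<rho>_def using Tpos by simp
  have omr: "1 - \<rho> = W / T" unfolding \<rho>_def using Tpos TLW by (simp add: field_simps)
  have rho1: "\<rho> < 1" using omr Wpos Tpos by (smt (verit) divide_pos_pos)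
  have eq2: "2 / (1 - \<rho>) = 2 * T / W" unfolding omr using Tpos Wpos by (simp add: field_simps)
  have "2 * T = real_of_int b * (2 * real_of_int m2)" unfolding T_def by simp
  also have "\<dots> \<le> real_of_int b * (y powr \<theta> * real_of_int (m2 - m1 + 1))"
    using T0 bpos by (intro mult_left_mono) auto
  also have "\<dots> = y powr \<theta> * W" unfolding W_def by simp
  finally have "2 * T \<le> y powr \<theta> * W" .
  then have T0': "2 / (1 - \<rho>) \<le> y powr \<theta>" unfolding eq2 using Wpos by (simp add: pos_divide_le_eq)
  have "2 * T \<le> T * W" using two Tpos unfolding W_def by (simp add: mult.commute mult_left_mono)
  then have tT: "2 / (1 - \<rho>) \<le> T" unfolding eq2 using Wpos by (simp add: pos_divide_le_eq)
  have Tk': "T \<le> y powr (1 + real k * (1 - 2*\<theta>))" using Tk unfolding T_def .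
  have "(1 - \<rho>) * T * gfun \<theta> k \<le> real (cnt y (\<rho> * T) T)"
    by (rule lower_rec[OF y th ly rho0 rho1 T0' tT Tk'])
  moreover have "(1 - \<rho>) * T = W" unfolding omr using Tpos by simp
  ultimately have "W * gfun \<theta> k \<le> real (cnt y L T)" unfolding rhoT by simp
  then have "gfun \<theta> k \<le> real (cnt y L T) / W" using Wpos by (simp add: pos_le_divide_eq mult.commute)
  then show ?thesis unfolding T_def L_def W_def .
qed

lemma core_upper:
  assumes y: "1 \<le> y" "y \<le> 2^(2^N)" and eta: "0 < \<eta>" "\<eta> \<le> 1/2" and L: "0 \<le> L" and T: "1 \<le> T"
  shows "real (cnt y L T) \<le> T powr (1-\<eta>) * exp (4 * (10 * y powr \<eta> + 10 * real N * y powr (\<eta>/2) + 2))"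
proof -
  have sub: "{n::nat. L < real n \<and> real n \<le> T \<and> sm y n} \<subseteq> {n::nat. 0 < n \<and> real n \<le> T \<and> sm y n}"
  proof
    fix n assume "n \<in> {n::nat. L < real n \<and> real n \<le> T \<and> sm y n}"
    then have "L < real n" "real n \<le> T" "sm y n" by auto
    moreover have "0 < n" using calculation(1) L by (intro Nat.gr0I) auto
    ultimately show "n \<in> {n::nat. 0 < n \<and> real n \<le> T \<and> sm y n}" by simp
  qed
  have fin: "finite {n::nat. 0 < n \<and> real n \<le> T \<and> sm y n}"
    using finite_nat_le_real[of T "\<lambda>n. 0 < n \<and> sm y n"] by (simp add: conj_commute conj_left_commute)
  have "real (cnt y L T) \<le> real (card {n::nat. 0 < n \<and> real n \<le> T \<and> sm y n})"
    unfolding cnt_def using card_mono[OF fin sub] by simp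
  also have "\<dots> \<le> T powr (1 - \<eta>) * exp (4 * Sp \<eta> y)" using T eta by (intro rankin) auto
  also have "\<dots> \<le> T powr (1 - \<eta>) * exp (4 * (10 * y powr \<eta> + 10 * real N * y powr (\<eta>/2) + 2))"
  proof (intro mult_left_mono)
    have "Sp \<eta> y \<le> 10 * y powr \<eta> + 10 * real N * y powr (\<eta>/2) + 2"
      using eta y by (intro Sp_bound) auto
    then show "exp (4 * Sp \<eta> y) \<le> exp (4 * (10 * y powr \<eta> + 10 * real N * y powr (\<eta>/2) + 2))" by simp
  qed simp
  finally show ?thesis .
qed



lemma per_n:
  fixes \<delta> \<sigma> \<beta> e c \<theta> \<alpha> x :: real and n :: nat and b :: int
  assumes params: "\<delta> > 0" "\<sigma> > 0" "\<beta> > 0" "0 < e" "e \<le> 1" "c = 1/(3*\<beta>*\<delta>)"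
    "0 < \<theta>" "\<theta> \<le> 1/4" "\<alpha> = 1 - 2*\<theta>" "0 < \<alpha>"
  and x: "x = ln (real n)"
  and H1: "1 \<le> Df \<delta> x" and H2: "16 * Df \<delta> x \<le> exp (LHf \<delta> x)" and H3: "12 \<le> \<theta> * LYf \<beta> x"
  and H4: "16 * Df \<delta> x \<le> exp (\<theta> * LYf \<beta> x)"
  and H5: "ln 2 + Kf \<sigma> \<beta> \<delta> \<alpha> x * ln (2/\<theta>) + (Kf \<sigma> \<beta> \<delta> \<alpha> x + 1) * ln (Kf \<sigma> \<beta> \<delta> \<alpha> x + 1) \<le> c * (1+e) * Ef x"
  and H6: "1 < u0f \<beta> \<delta> x" "ln (u0f \<beta> \<delta> x) / LYf \<beta> x \<le> 1/2"
  and H7: "ln 2 \<le> LYf \<beta> x"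
  and H8: "c * (1 - e) * Ef x \<le> ln (u0f \<beta> \<delta> x) / LYf \<beta> x * (LHf \<delta> x - ln 2) - ln (8 * Df \<delta> x)
      - 4 * (10 * u0f \<beta> \<delta> x + 10 * (log 2 (LYf \<beta> x / ln 2) + 1) * sqrt (u0f \<beta> \<delta> x) + 2)"
  and H9: "0 < Ef x"
  and b: "0 < b" "real_of_int b \<le> 1/2 * Lfun (real n) (1/3) \<sigma>"
  shows "inverse (Lfun (real n) (1/3) (c * (1 + e))) \<le> smooth_prob n \<delta> \<beta> b \<and>
         smooth_prob n \<delta> \<beta> b \<le> inverse (Lfun (real n) (1/3) (c * (1 - e)))"
proof -
  have LT: "Lfun (real n) (1/3) c' = exp (c' * Ef x)" for c'
    unfolding Lfun_third Ef_def x by (simp add: mult.assoc)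
  have LYE: "LYf \<beta> x = \<beta> * Ef x" unfolding LYf_def Ef_def by (simp add: mult.assoc)
  have LH: "Lfun (real n) (2/3) (1/\<delta>) = exp (LHf \<delta> x)" unfolding Lfun_twothird LHf_def x by simp
  define D where "D = Df \<delta> x"
  define hi where "hi = exp (LHf \<delta> x)"
  define lo where "lo = 2 powr (-1/D) * hi"
  define yB where "yB = exp (LYf \<beta> x)"
  define u0 where "u0 = u0f \<beta> \<delta> x"
  define LY where "LY = LYf \<beta> x"
  define E where "E = Ef x"
  have Dd: "\<delta> * (ln (real n) / ln (ln (real n))) powr (1/3) = D" unfolding D_def Df_def x ..
  have MR: "m_range n \<delta> = {\<lceil>lo\<rceil>..\<lfloor>hi\<rfloor>}" unfolding m_range_eq Dd LH lo_def hi_def ..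
  define m1 where "m1 = \<lceil>lo\<rceil>"
  define m2 where "m2 = \<lfloor>hi\<rfloor>"
  have D1: "1 \<le> D" using H1 unfolding D_def .
  have hiD: "16 * D \<le> hi" using H2 unfolding D_def hi_def .
  have hipos: "0 < hi" unfolding hi_def by simp
  have lopos: "0 < lo" unfolding lo_def using hipos by simp
  have LYpos: "0 < LY" using H7 ln2_ge_half unfolding LY_def by linarith
  have l2: "1/2 \<le> ln (2::real)" "ln (2::real) \<le> 1" using ln2_ge_half ln_2_less_1 by auto
  have gap: "hi / (4 * D) \<le> hi - lo"
  proof -
    define s where "s = ln 2 / D"
    have s: "0 < s" "s \<le> 1" using D1 l2 unfolding s_def by (auto simp: field_simps)
    have "2 powr (-1/D) = exp (- s)" unfolding s_def powr_def by simp
    moreover have "exp (- s) \<le> 1 / (1 + s)"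
    proof -
      have "1 + s \<le> exp s" by (rule exp_ge_add_one_self)
      then show ?thesis using s by (simp add: exp_minus field_simps)
    qed
    ultimately have "1 - 2 powr (-1/D) \<ge> 1 - 1 / (1 + s)" by simp
    moreover have "1 - 1 / (1 + s) \<ge> s / 2" using s by (simp add: field_simps)
    moreover have "s / 2 \<ge> 1 / (4 * D)" using D1 l2 unfolding s_def by (simp add: field_simps)
    ultimately have "1 / (4 * D) \<le> 1 - 2 powr (-1/D)" by linarith
    then have "hi * (1 / (4 * D)) \<le> hi * (1 - 2 powr (-1/D))" using hipos by (intro mult_left_mono) auto
    then show ?thesis unfolding lo_def by (simp add: algebra_simps)
  qed
  have m1pos: "1 \<le> m1" unfolding m1_def using lopos by simp
  have m1le: "real_of_int m1 \<le> lo + 1" unfolding m1_def by (rule of_int_ceiling_le_add_one)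
  have m2ge: "hi - 1 < real_of_int m2" unfolding m2_def by (rule real_of_int_floor_gt_diff_one)
  have m2le: "real_of_int m2 \<le> hi" unfolding m2_def by (rule of_int_floor_le)
  define q where "q = hi / (8 * D)"
  have q2: "2 \<le> q" unfolding q_def using hiD D1 by (simp add: field_simps)
  have q4: "hi / (4 * D) = 2 * q" unfolding q_def using D1 by (simp add: field_simps)
  have W0: "q \<le> real_of_int (m2 - m1 + 1)" using gap q4 q2 m1le m2ge by simp
  have W2: "2 \<le> real_of_int (m2 - m1 + 1)" using W0 q2 by linarith
  have m12: "m1 \<le> m2" using W2 by simp
  have m2W: "real_of_int m2 \<le> 8 * D * real_of_int (m2 - m1 + 1)"
  proof -
    have "hi = 8 * D * q" unfolding q_def using D1 by simp
    also have "\<dots> \<le> 8 * D * real_of_int (m2 - m1 + 1)" using W0 D1 by (intro mult_left_mono) auto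
    finally show ?thesis using m2le by linarith
  qed
  have m2half: "hi / 2 \<le> real_of_int m2" using m2ge hiD D1 by linarith
  have m2pos: "0 < real_of_int m2" using m1pos m12 by simp
  have prob: "smooth_prob n \<delta> \<beta> b = real (cnt yB (real_of_int (b * (m1 - 1))) (real_of_int (b * m2)))
           / (real_of_int b * real_of_int (m2 - m1 + 1))"
    using smooth_prob_eq[OF b(1) m1pos m12, of n \<delta> \<beta>] MR LT[of \<beta>] LYE
    unfolding m1_def m2_def yB_def by simp
  have bge1: "1 \<le> real_of_int b" using b by simp
  have lnb: "ln (real_of_int b) \<le> \<sigma> * E"
  proof -
    have be0: "2 * real_of_int b \<le> exp (\<sigma> * E)" using b(2) LT[of \<sigma>] unfolding E_def by simp
    have be: "real_of_int b \<le> exp (\<sigma> * E)" using be0 bge1 by linarith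
    have "ln (real_of_int b) \<le> ln (exp (\<sigma> * E))" using bge1 be by (subst ln_le_cancel_iff) auto
    then show ?thesis by simp
  qed
  define T where "T = real_of_int (b * m2)"
  have bm: "1 \<le> b * m2" using mult_mono[of 1 b 1 m2] b(1) m1pos m12 by simp
  have T1: "1 \<le> T" unfolding T_def using bm by (metis of_int_1 of_int_le_iff)
  have Tb: "T = real_of_int b * real_of_int m2" unfolding T_def by simp
  have lnT: "ln T \<le> \<sigma> * E + LHf \<delta> x"
  proof -
    have "ln T = ln (real_of_int b) + ln (real_of_int m2)" unfolding Tb using bge1 m2pos by (simp add: ln_mult)
    moreover have "ln (real_of_int m2) \<le> LHf \<delta> x"
    proof -
      have "ln (real_of_int m2) \<le> ln hi" using m2pos m2le hipos by simp
      then show ?thesis unfolding hi_def by simp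
    qed
    ultimately show ?thesis using lnb by linarith
  qed
  have yBpowr: "yB powr r = exp (r * LY)" for r unfolding yB_def LY_def powr_def by simp
  have gt1: "1 < yB" unfolding yB_def using LYpos unfolding LY_def by simp
  have lower: "exp (- (c * (1 + e) * E)) \<le> smooth_prob n \<delta> \<beta> b"
  proof -
    define v where "v = (ln T / LY - 1) / \<alpha>"
    define k where "k = nat \<lceil>v\<rceil>"
    have kv: "v \<le> real k" unfolding k_def by linarith
    have Tk: "T \<le> yB powr (1 + real k * (1 - 2*\<theta>))"
    proof -
      have "(ln T / LY - 1) \<le> real k * \<alpha>" using kv params(10) unfolding v_def by (simp add: field_simps)
      then have "ln T / LY \<le> 1 + real k * \<alpha>" by simp
      then have "ln T \<le> (1 + real k * \<alpha>) * LY" using LYpos by (simp add: field_simps)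
      then have "exp (ln T) \<le> exp ((1 + real k * \<alpha>) * LY)" by simp
      then show ?thesis using T1 unfolding yBpowr params(9)[symmetric] by simp
    qed
    have ly: "12 \<le> \<theta> * ln yB" using H3 unfolding yB_def by simp
    have two: "2 \<le> real_of_int b * real_of_int (m2 - m1 + 1)"
      using mult_mono[OF bge1 W2] W2 b(1) by simp
    have T0: "2 * real_of_int m2 \<le> yB powr \<theta> * real_of_int (m2 - m1 + 1)"
    proof -
      have "2 * real_of_int m2 \<le> 16 * D * real_of_int (m2 - m1 + 1)" using m2W by linarith
      also have "\<dots> \<le> yB powr \<theta> * real_of_int (m2 - m1 + 1)"
        using H4 W2 unfolding yBpowr D_def LY_def by (intro mult_right_mono) (auto simp: mult.commute)
      finally show ?thesis .
    qed
    have Tk': "real_of_int (b * m2) \<le> yB powr (1 + real k * (1 - 2*\<theta>))" using Tk unfolding T_def .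
    have "gfun \<theta> k \<le> smooth_prob n \<delta> \<beta> b"
      unfolding prob by (rule core_lower[OF gt1 params(7,8) ly b(1) m1pos m12 two T0 Tk'])
    moreover have "exp (- (ln 2 + Kf \<sigma> \<beta> \<delta> \<alpha> x * ln (2/\<theta>) + (Kf \<sigma> \<beta> \<delta> \<alpha> x + 1) * ln (Kf \<sigma> \<beta> \<delta> \<alpha> x + 1))) \<le> gfun \<theta> k"
    proof (rule gfun_lower)
      show "0 < \<theta>" "\<theta> \<le> 1" using params by auto
      have u0: "u0 = LHf \<delta> x / LY" unfolding u0_def u0f_def LY_def ..
      have "v \<le> ((\<sigma> * E + LHf \<delta> x) / LY - 1) / \<alpha>"
        unfolding v_def using lnT LYpos params(10) by (intro divide_right_mono diff_right_mono) (auto simp: divide_right_mono)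
      also have "(\<sigma> * E + LHf \<delta> x) / LY = \<sigma> / \<beta> + u0"
        unfolding u0 LY_def LYE E_def using params(3) H9 by (simp add: field_simps)
      finally have v1: "v \<le> (\<sigma> / \<beta> + u0 - 1) / \<alpha>" .
      have "(\<sigma> / \<beta> + u0 - 1) / \<alpha> + 1 \<le> (\<sigma> / \<beta> + u0) / \<alpha> + 1"
        using params(10) by (simp add: divide_right_mono)
      then have "v + 1 \<le> Kf \<sigma> \<beta> \<delta> \<alpha> x" using v1 unfolding Kf_def u0_def[symmetric] by simp
      moreover have "0 \<le> Kf \<sigma> \<beta> \<delta> \<alpha> x"
        unfolding Kf_def using H6 params by (intro add_nonneg_nonneg divide_nonneg_pos) auto
      moreover have "real k \<le> max 0 (v + 1)" unfolding k_def by linarith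
      ultimately show "real k \<le> Kf \<sigma> \<beta> \<delta> \<alpha> x" by linarith
    qed
    moreover have "exp (- (c * (1 + e) * E)) \<le> exp (- (ln 2 + Kf \<sigma> \<beta> \<delta> \<alpha> x * ln (2/\<theta>) + (Kf \<sigma> \<beta> \<delta> \<alpha> x + 1) * ln (Kf \<sigma> \<beta> \<delta> \<alpha> x + 1)))"
      using H5 unfolding E_def by (subst exp_le_cancel_iff) linarith
    ultimately show ?thesis by linarith
  qed
  have upper: "smooth_prob n \<delta> \<beta> b \<le> exp (- (c * (1 - e) * E))"
  proof -
    define \<eta> where "\<eta> = ln u0 / LY"
    have u1: "1 < u0" using H6 unfolding u0_def by simp
    have eta: "0 < \<eta>" "\<eta> \<le> 1/2" unfolding \<eta>_def u0_def LY_def using H6 LYpos unfolding LY_def by auto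
    define lg where "lg = log 2 (LY / ln 2)"
    define N where "N = nat \<lceil>lg\<rceil>"
    have LY2: "1 \<le> LY / ln 2" using H7 l2 unfolding LY_def by simp
    have LY2p: "0 < LY / ln 2" using LY2 by linarith
    have lg0: "0 \<le> lg" unfolding lg_def using LY2 LY2p by (subst zero_le_log_cancel_iff) auto
    have Nlg: "lg \<le> real N" unfolding N_def by linarith
    have Nle: "real N \<le> lg + 1" unfolding N_def using lg0 by linarith
    have y2N: "yB \<le> 2^(2^N)"
    proof -
      have "LY / ln 2 = 2 powr lg" unfolding lg_def using LY2p by simp
      also have "\<dots> \<le> 2 powr (real N)" using Nlg by simp
      also have "\<dots> = 2^N" by (simp add: powr_realpow)
      finally have a: "LY / ln 2 \<le> 2^N" .
      have "yB = 2 powr (LY / ln 2)" unfolding yB_def LY_def powr_def using l2 by simp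
      also have "\<dots> \<le> 2 powr (real (2^N))" using a by simp
      also have "\<dots> = 2^(2^N)" by (rule powr_realpow) simp
      finally show ?thesis .
    qed
    have yeta: "yB powr \<eta> = u0" unfolding yBpowr \<eta>_def using LYpos u1 by simp
    have yeta2: "yB powr (\<eta>/2) = sqrt u0"
    proof -
      have "yB powr (\<eta>/2) = exp (ln u0 / 2)" unfolding yBpowr \<eta>_def using LYpos by simp
      also have "\<dots> = u0 powr (1/2)" unfolding powr_def using u1 by simp
      also have "\<dots> = sqrt u0" using u1 by (simp add: powr_half_sqrt)
      finally show ?thesis .
    qed
    define X where "X = exp (4 * (10 * u0 + 10 * (lg + 1) * sqrt u0 + 2))"
    have L0: "0 \<le> real_of_int (b * (m1 - 1))" using b m1pos by simp
    have "real (cnt yB (real_of_int (b * (m1 - 1))) T) \<le> T powr (1 - \<eta>) * exp (4 * (10 * yB powr \<eta> + 10 * real N * yB powr (\<eta>/2) + 2))"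
      using gt1 y2N eta L0 T1 by (intro core_upper) auto
    also have "\<dots> \<le> T powr (1 - \<eta>) * X"
    proof (intro mult_left_mono)
      have h: "10 * real N * sqrt u0 \<le> 10 * (lg + 1) * sqrt u0" using Nle u1 by (intro mult_right_mono) auto
      show "exp (4 * (10 * yB powr \<eta> + 10 * real N * yB powr (\<eta>/2) + 2)) \<le> X"
        unfolding X_def yeta yeta2 by (subst exp_le_cancel_iff) (intro mult_left_mono add_mono order_refl h, simp)
    qed simp
    finally have c1: "real (cnt yB (real_of_int (b * (m1 - 1))) T) \<le> T powr (1 - \<eta>) * X" .
    have Tp: "T powr (1 - \<eta>) = T / T powr \<eta>" using T1 by (simp add: powr_diff)
    have TW: "T / (real_of_int b * real_of_int (m2 - m1 + 1)) \<le> 8 * D"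
    proof -
      have W0pos: "0 < real_of_int (m2 - m1 + 1)" using W2 by simp
      have "T / (real_of_int b * real_of_int (m2 - m1 + 1)) = real_of_int m2 / real_of_int (m2 - m1 + 1)"
        unfolding Tb using bge1 by simp
      also have "\<dots> \<le> 8 * D" using m2W W0pos by (simp add: pos_divide_le_eq)
      finally show ?thesis .
    qed
    have Teta: "exp (\<eta> * (LHf \<delta> x - ln 2)) \<le> T powr \<eta>"
    proof -
      have "exp (\<eta> * (LHf \<delta> x - ln 2)) = (hi / 2) powr \<eta>"
        unfolding hi_def powr_def using hipos by (simp add: ln_div hi_def)
      also have "\<dots> \<le> T powr \<eta>"
      proof (rule powr_mono2)
        show "hi / 2 \<le> T" using m2half Tb bge1 m2pos by (smt (verit) mult_le_cancel_right1)
      qed (use eta hipos in auto)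
      finally show ?thesis .
    qed
    have "smooth_prob n \<delta> \<beta> b \<le> T powr (1 - \<eta>) * X / (real_of_int b * real_of_int (m2 - m1 + 1))"
      unfolding prob T_def[symmetric] using c1 bge1 W2 by (intro divide_right_mono) auto
    also have "\<dots> = (T / (real_of_int b * real_of_int (m2 - m1 + 1))) * X / T powr \<eta>"
      unfolding Tp using T1 by (simp add: field_simps)
    also have "\<dots> \<le> 8 * D * X / exp (\<eta> * (LHf \<delta> x - ln 2))"
    proof (rule frac_le)
      show "T / (real_of_int b * real_of_int (m2 - m1 + 1)) * X \<le> 8 * D * X"
        using TW unfolding X_def by (intro mult_right_mono) auto
    qed (use Teta D1 X_def in auto)
    also have "\<dots> = exp (ln (8 * D) + 4 * (10 * u0 + 10 * (lg + 1) * sqrt u0 + 2) - \<eta> * (LHf \<delta> x - ln 2))"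
      unfolding X_def using D1 by (simp add: exp_diff exp_add)
    also have "\<dots> \<le> exp (- (c * (1 - e) * E))"
      using H8 unfolding E_def lg_def LY_def \<eta>_def u0_def D_def by (subst exp_le_cancel_iff) linarith
    finally show ?thesis .
  qed
  have "inverse (Lfun (real n) (1/3) (c * (1 + e))) = exp (- (c * (1 + e) * E))"
    unfolding LT E_def by (simp add: exp_minus)
  moreover have "inverse (Lfun (real n) (1/3) (c * (1 - e))) = exp (- (c * (1 - e) * E))"
    unfolding LT E_def by (simp add: exp_minus)
  ultimately show ?thesis using lower upper by simp
qed

lemma inv_Lfun_mono:
  assumes "c1 \<le> c2"
  shows "inverse (Lfun z a c2) \<le> inverse (Lfun z a c1)"
proof -
  have "c1 * ln z powr a * ln (ln z) powr (1 - a) \<le> c2 * ln z powr a * ln (ln z) powr (1 - a)"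
    using assms by (intro mult_right_mono) auto
  then have "Lfun z a c1 \<le> Lfun z a c2" unfolding Lfun_def by simp
  moreover have "0 < Lfun z a c1" unfolding Lfun_def by simp
  ultimately show ?thesis by (rule le_imp_inverse_le)
qed

theorem proposition5p5:
  fixes \<delta> \<sigma> \<beta> :: real
  assumes "\<delta> > 0" and "\<sigma> > 0" and "\<beta> > 0"
  shows "\<forall>\<epsilon>>0. \<forall>\<^sub>F n in sequentially. \<forall>b::int.
           0 < b \<and> real_of_int b \<le> 1/2 * Lfun (real n) (1/3) \<sigma> \<longrightarrow>
             inverse (Lfun (real n) (1/3) (1 / (3 * \<beta> * \<delta>) * (1 + \<epsilon>))) \<le> smooth_prob n \<delta> \<beta> b \<and>
             smooth_prob n \<delta> \<beta> b \<le> inverse (Lfun (real n) (1/3) (1 / (3 * \<beta> * \<delta>) * (1 - \<epsilon>)))"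
proof (intro allI impI)
  fix \<epsilon> :: real assume eps: "\<epsilon> > 0"
  define e where "e = min \<epsilon> 1"
  have e: "0 < e" "e \<le> 1" "e \<le> \<epsilon>" using eps unfolding e_def by auto
  define c where "c = 1 / (3 * \<beta> * \<delta>)"
  have cpos: "0 < c" unfolding c_def using assms by simp
  define \<theta> where "\<theta> = e / (4 + 2*e)"
  define \<alpha> where "\<alpha> = 1 - 2*\<theta>"
  have th: "0 < \<theta>" "\<theta> \<le> 1/4" unfolding \<theta>_def using e by (auto simp: field_simps)
  have alpha_eq: "\<alpha> = 4 / (4 + 2*e)" unfolding \<alpha>_def \<theta>_def using e by (simp add: field_simps)
  have al: "0 < \<alpha>" unfolding alpha_eq using e by simp
  have inva: "1/\<alpha> < 1 + e" unfolding alpha_eq using e by (simp add: field_simps)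
  note P = assms(3) assms(1) assms(2) th(1) al
  have ev5: "eventually (\<lambda>x. ln 2 + Kf \<sigma> \<beta> \<delta> \<alpha> x * ln (2/\<theta>) + (Kf \<sigma> \<beta> \<delta> \<alpha> x + 1) * ln (Kf \<sigma> \<beta> \<delta> \<alpha> x + 1) \<le> c * (1+e) * Ef x) at_top"
  proof -
    have "eventually (\<lambda>x. (ln 2 + Kf \<sigma> \<beta> \<delta> \<alpha> x * ln (2/\<theta>) + (Kf \<sigma> \<beta> \<delta> \<alpha> x + 1) * ln (Kf \<sigma> \<beta> \<delta> \<alpha> x + 1))
      / ((1/(3*\<beta>*\<delta>)) * Ef x) < 1 + e) at_top"
      by (rule order_tendstoD(2)[OF F5lim[OF P] inva])
    then show ?thesis using F9[OF P]
    proof eventually_elim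
      case (elim x)
      have cE: "0 < c * Ef x" using elim(2) cpos by simp
      from elim(1) have "(ln 2 + Kf \<sigma> \<beta> \<delta> \<alpha> x * ln (2/\<theta>) + (Kf \<sigma> \<beta> \<delta> \<alpha> x + 1) * ln (Kf \<sigma> \<beta> \<delta> \<alpha> x + 1))
         < (1 + e) * (c * Ef x)" unfolding c_def[symmetric] using cE by (simp add: pos_divide_less_eq)
      then show ?case by (simp add: mult_ac)
    qed
  qed
  have ev8: "eventually (\<lambda>x. c * (1 - e) * Ef x \<le> ln (u0f \<beta> \<delta> x) / LYf \<beta> x * (LHf \<delta> x - ln 2) - ln (8 * Df \<delta> x)
      - 4 * (10 * u0f \<beta> \<delta> x + 10 * (log 2 (LYf \<beta> x / ln 2) + 1) * sqrt (u0f \<beta> \<delta> x) + 2)) at_top"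
  proof -
    have "1 - e < 1" using e by simp
    then have "eventually (\<lambda>x. 1 - e < (ln (u0f \<beta> \<delta> x) / LYf \<beta> x * (LHf \<delta> x - ln 2) - ln (8 * Df \<delta> x)
      - 4 * (10 * u0f \<beta> \<delta> x + 10 * (log 2 (LYf \<beta> x / ln 2) + 1) * sqrt (u0f \<beta> \<delta> x) + 2))
      / ((1/(3*\<beta>*\<delta>)) * Ef x)) at_top"
      by (rule order_tendstoD(1)[OF F8lim[OF P]])
    then show ?thesis using F9[OF P]
    proof eventually_elim
      case (elim x)
      have cE: "0 < c * Ef x" using elim(2) cpos by simp
      from elim(1) have "(1 - e) * (c * Ef x) < ln (u0f \<beta> \<delta> x) / LYf \<beta> x * (LHf \<delta> x - ln 2) - ln (8 * Df \<delta> x)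
      - 4 * (10 * u0f \<beta> \<delta> x + 10 * (log 2 (LYf \<beta> x / ln 2) + 1) * sqrt (u0f \<beta> \<delta> x) + 2)"
        unfolding c_def[symmetric] using cE by (simp add: pos_less_divide_eq)
      then show ?case by (simp add: mult_ac)
    qed
  qed
  have ev: "eventually (\<lambda>x. 1 \<le> Df \<delta> x \<and> 16 * Df \<delta> x \<le> exp (LHf \<delta> x) \<and> 12 \<le> \<theta> * LYf \<beta> x \<and>
      16 * Df \<delta> x \<le> exp (\<theta> * LYf \<beta> x) \<and>
      ln 2 + Kf \<sigma> \<beta> \<delta> \<alpha> x * ln (2/\<theta>) + (Kf \<sigma> \<beta> \<delta> \<alpha> x + 1) * ln (Kf \<sigma> \<beta> \<delta> \<alpha> x + 1) \<le> c * (1+e) * Ef x \<and>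
      1 < u0f \<beta> \<delta> x \<and> ln (u0f \<beta> \<delta> x) / LYf \<beta> x \<le> 1/2 \<and> ln 2 \<le> LYf \<beta> x \<and>
      c * (1 - e) * Ef x \<le> ln (u0f \<beta> \<delta> x) / LYf \<beta> x * (LHf \<delta> x - ln 2) - ln (8 * Df \<delta> x)
      - 4 * (10 * u0f \<beta> \<delta> x + 10 * (log 2 (LYf \<beta> x / ln 2) + 1) * sqrt (u0f \<beta> \<delta> x) + 2) \<and>
      0 < Ef x) at_top"
    using F1[OF P] F2[OF P] F3[OF P] F4[OF P] ev5 F6a[OF P] F6b[OF P] F7[OF P] ev8 F9[OF P]
    by eventually_elim auto
  have lim_ln: "filterlim (\<lambda>n::nat. ln (real n)) at_top sequentially"
    by (rule filterlim_compose[OF ln_at_top filterlim_real_sequentially])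
  note evn = eventually_compose_filterlim[OF ev lim_ln]
  show "\<forall>\<^sub>F n in sequentially. \<forall>b::int.
           0 < b \<and> real_of_int b \<le> 1/2 * Lfun (real n) (1/3) \<sigma> \<longrightarrow>
             inverse (Lfun (real n) (1/3) (1 / (3 * \<beta> * \<delta>) * (1 + \<epsilon>))) \<le> smooth_prob n \<delta> \<beta> b \<and>
             smooth_prob n \<delta> \<beta> b \<le> inverse (Lfun (real n) (1/3) (1 / (3 * \<beta> * \<delta>) * (1 - \<epsilon>)))"
    using evn
  proof eventually_elim
    case (elim n)
    show ?case
    proof (intro allI impI)
      fix b :: int assume hb: "0 < b \<and> real_of_int b \<le> 1/2 * Lfun (real n) (1/3) \<sigma>"
      have main: "inverse (Lfun (real n) (1/3) (c * (1 + e))) \<le> smooth_prob n \<delta> \<beta> b \<and>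
         smooth_prob n \<delta> \<beta> b \<le> inverse (Lfun (real n) (1/3) (c * (1 - e)))"
        by (rule per_n[OF assms(1) assms(2) assms(3) e(1) e(2) c_def th \<alpha>_def al refl]) (use elim hb in auto)
      have m1: "inverse (Lfun (real n) (1/3) (1 / (3 * \<beta> * \<delta>) * (1 + \<epsilon>))) \<le> inverse (Lfun (real n) (1/3) (c * (1 + e)))"
        by (rule inv_Lfun_mono) (use cpos e in \<open>simp add: c_def[symmetric] mult_left_mono\<close>)
      have m2: "inverse (Lfun (real n) (1/3) (c * (1 - e))) \<le> inverse (Lfun (real n) (1/3) (1 / (3 * \<beta> * \<delta>) * (1 - \<epsilon>)))"
        by (rule inv_Lfun_mono) (use cpos e in \<open>simp add: c_def[symmetric] mult_left_mono\<close>)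
      show "inverse (Lfun (real n) (1/3) (1 / (3 * \<beta> * \<delta>) * (1 + \<epsilon>))) \<le> smooth_prob n \<delta> \<beta> b \<and>
             smooth_prob n \<delta> \<beta> b \<le> inverse (Lfun (real n) (1/3) (1 / (3 * \<beta> * \<delta>) * (1 - \<epsilon>)))"
        using main m1 m2 by linarith
    qed
  qed
qed

end
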